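(* Let $d\ge2$, $n=3$, and $\mathcal T=\sum_{k=1}^4\mathbf v_k^{\otimes d}$. (i) If $d=2$, every unit vector $\mathbf v\in\mathbb R^3$ is an eigenvector with eigenvalue $\frac43$. (ii) If $d\ge3$ is odd, a unit vector $\mathbf v\in\mathbb R^3$ is an eigenvector of $\mathcal T$ if and only if there is a nonempty $K\subset\{1,2,3,4\}$ with $|K|\le3$ such that $\mathbf v=\sum_{k\in K}\mathbf v_k\big/\sqrt{|K|(4-|K|)/3}$, with eigenvalue $\mu=\dfrac{(4-|K|)^{d-1}-|K|^{d-1}}{3^{d/2}(|K|(4-|K|))^{d/2-1}}$. Moreover $\mu=0$ if and only if $|K|=2$, and the normalized eigenvectors with eigenvalue $0$ are, up to sign, exactly the three linearly independent vectors $(\mathbf v_1+\mathbf v_2)/\sqrt{4/3}$, $(\mathbf v_1+\mathbf v_3)/\sqrt{4/3}$, $(\mathbf v_1+\mathbf v_4)/\sqrt{4/3}$. (iii) If $d\ge4$ is even, a unit vector $\mathbf v\in\mathbb R^3$ is an eigenvector of $\mathcal T$ if and only if either (a) there is a nonempty $K\subset\{1,2,3,4\}$ with $|K|\le3$ such that $\mathbf v=\sum_{k\in K}\mathbf v_k/\sqrt{|K|(4-|K|)/3}$, with positive eigenvalue $\mu=\dfrac{(4-|K|)^{d-1}+|K|^{d-1}}{3^{d/2}(|K|(4-|K|))^{d/2-1}}$; or (b) there are nonempty disjoint $K_1,K_2\subset\{1,2,3,4\}$ with $|K_1\cup K_2|\le3$ and numbers $0<a\le s^*<b\le1$ with $|K_1|a+|K_2|b=1$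 and $g(a)/a=g(b)/b$, such that $\mathbf v=\big(a\sum_{k\in K_1}\mathbf v_k+b\sum_{k\in K_2}\mathbf v_k\big)\big/\sqrt{(4a^2|K_1|+4b^2|K_2|-1)/3}$, with positive eigenvalue $\mu=\dfrac{|K_1|(4a-1)^d+|K_2|(4b-1)^d+4-|K_1|-|K_2|}{3^{d/2}(4a^2|K_1|+4b^2|K_2|-1)^{d/2}}$.
   Context: Simplex frame for $n=3$: $\mathbf v_k=\sqrt{4/3}\,\mathbf e_k-3^{-3/2}\,\mathbf 1_3$ for $k=1,2,3$ and $\mathbf v_4=-\frac1{\sqrt3}\mathbf 1_3$, where $\mathbf e_k$ are unit vectors of $\mathbb R^3$ and $\mathbf 1_3=(1,1,1)^\top$; these are unit vectors with pairwise inner product $-\frac13$ and sum $\mathbf 0$. $\mathcal T\cdot\mathbf v^{d-1}=\sum_{k=1}^4\langle\mathbf v,\mathbf v_k\rangle^{d-1}\mathbf v_k$; $\mathbf v\ne\mathbf 0$ is an eigenvector with eigenvalue $\mu$ if $\mathcal T\cdot\mathbf v^{d-1}=\mu\mathbf v$. $g(s)=(4s-1)^{d-1}-(-1)^{d-1}$, and for even $d\ge4$, $s^*\in[\frac13,\frac12)$ is the unique point such that $g(s)/s$ is strictly decreasing on $[0,s^*]$ and strictly increasing on $[s^*,\infty)$. *)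

theory Defs
  imports "HOL-Analysis.Analysis"
begin

text \<open>Simplex frame in R^3: v_k = sqrt(4/3) e_k - 3^(-3/2) 1 for k = 1,2,3 and
  v_4 = -(1/sqrt 3) 1. The unit vector e_k is the axis with index k-1 of type 3.\<close>
definition svec :: "nat \<Rightarrow> real^3" where
  "svec k = (if k = 4 then (- 1 / sqrt 3) *\<^sub>R (\<chi> i. 1)
             else sqrt (4/3) *\<^sub>R axis (of_nat (k - 1) :: 3) 1 - (3 powr (-3/2)) *\<^sub>R (\<chi> i. 1))"

text \<open>T . v^(d-1) = sum_k <v, v_k>^(d-1) v_k\<close>
definition Tapply :: "nat \<Rightarrow> real^3 \<Rightarrow> real^3" where
  "Tapply d v = (\<Sum>k\<in>{1..4}. (v \<bullet> svec k) ^ (d - 1) *\<^sub>R svec k)"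

definition is_eigenpair :: "nat \<Rightarrow> real^3 \<Rightarrow> real \<Rightarrow> bool" where
  "is_eigenpair d v \<mu> \<longleftrightarrow> v \<noteq> 0 \<and> Tapply d v = \<mu> *\<^sub>R v"

definition gfun :: "nat \<Rightarrow> real \<Rightarrow> real" where
  "gfun d s = (4 * s - 1) ^ (d - 1) - (-1) ^ (d - 1)"

text \<open>s*: the unique point of [1/3,1/2) where g(s)/s switches from strictly decreasing
  to strictly increasing (monotonicity on (0,s*] since g(s)/s is undefined at 0).\<close>
definition s_star :: "nat \<Rightarrow> real" where
  "s_star d = (THE s. 1/3 \<le> s \<and> s < 1/2 \<and>
     (\<forall>x\<in>{0<..s}. \<forall>y\<in>{0<..s}. x < y \<longrightarrow> gfun d y / y < gfun d x / x) \<and>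
     (\<forall>x\<in>{s..}. \<forall>y\<in>{s..}. x < y \<longrightarrow> gfun d x / x < gfun d y / y))"

end

theory Submission imports Defs begin



lemma pow32: "(3::real) powr (-3/2) = 1 / (3 * sqrt 3)"
proof -
  have "(3::real) powr (3/2) = 3 powr (1 + 1/2)" by simp
  also have "\<dots> = 3 powr 1 * 3 powr (1/2)" by (rule powr_add)
  also have "\<dots> = 3 * sqrt 3" by (simp add: powr_half_sqrt)
  finally have "(3::real) powr (3/2) = 3 * sqrt 3" .
  moreover have "(3::real) powr (-3/2) = 1 / 3 powr (3/2)"
    by (simp add: powr_minus_divide)
  ultimately show ?thesis by simp
qed

lemma sq43: "sqrt (4/3::real) = 2 / sqrt 3"
  by (simp add: real_sqrt_divide)

definition rr :: real where "rr = 1 / (3 * sqrt 3)"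
lemma rr2: "rr * rr = 1/27"
  by (simp add: rr_def)

lemma svecdef: "svec k = (if k = 4 then (-3*rr) *\<^sub>R (\<chi> i. 1)
             else (6*rr) *\<^sub>R axis (of_nat (k - 1) :: 3) 1 - rr *\<^sub>R (\<chi> i. 1))"
proof -
  have a: "- 1 / sqrt 3 = -3*rr" "sqrt (4/3) = 6*rr"
    by (simp_all add: rr_def sq43 field_simps)
  show ?thesis unfolding svec_def pow32 a rr_def[symmetric] ..
qed

lemma svec_comp:
  "svec 1 $ 1 = -rr" "svec 1 $ 2 = -rr" "svec 1 $ 3 = 5*rr"
  "svec 2 $ 1 = 5*rr" "svec 2 $ 2 = -rr" "svec 2 $ 3 = -rr"
  "svec 3 $ 1 = -rr" "svec 3 $ 2 = 5*rr" "svec 3 $ 3 = -rr"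
  "svec 4 $ 1 = -3*rr" "svec 4 $ 2 = -3*rr" "svec 4 $ 3 = -3*rr"
  apply (simp_all add: svecdef axis_def)
  done


lemma svec_comp1: "svec (Suc 0) $ 1 = -rr" "svec (Suc 0) $ 2 = -rr" "svec (Suc 0) $ 3 = 5*rr"
  using svec_comp by simp_all
lemma rr2': "rr * (rr * x) = x/27" using rr2 by (metis mult.assoc mult.commute divide_inverse mult_1)

lemma four: "{1..4::nat} = {1,2,3,4}" by auto

lemma inner_svec: assumes "i \<in> {1..4}" "j \<in> {1..4}"
  shows "svec i \<bullet> svec j = (if i = j then 1 else -1/3)"
proof -
  have i: "i = 1 \<or> i = 2 \<or> i = 3 \<or> i = 4" and j: "j = 1 \<or> j = 2 \<or> j = 3 \<or> j = 4" using assms by auto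
  have r: "rr * rr = 1/27" by (rule rr2)
  show ?thesis using i j
    by (auto simp: inner_vec_def sum_3 svec_comp algebra_simps r rr2' svec_comp1)
qed

lemma frame: "(\<Sum>k\<in>{1..4}. (v \<bullet> svec k) *\<^sub>R svec k) = (4/3) *\<^sub>R (v::real^3)"
proof -
  have r: "rr * rr = 1/27" by (rule rr2)
  show ?thesis
    unfolding four vec_eq_iff forall_3
    by (simp add: inner_vec_def sum_3 svec_comp algebra_simps r rr2' svec_comp1)
qed

definition W :: "(nat \<Rightarrow> real) \<Rightarrow> real^3" where "W x = (\<Sum>k\<in>{1..4}. x k *\<^sub>R svec k)"
definition S4 :: "(nat \<Rightarrow> real) \<Rightarrow> real" where "S4 x = (\<Sum>k\<in>{1..4}. x k)"

lemma inner_svec_alt: "i \<in> {1..4} \<Longrightarrow> k \<in> {1..4} \<Longrightarrow>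
   svec k \<bullet> svec i = -1/3 + (if k = i then 4/3 else 0)"
  using inner_svec[of k i] by auto

lemma W_inner: assumes "i \<in> {1..4}" shows "W x \<bullet> svec i = (4 * x i - S4 x)/3"
proof -
  have "W x \<bullet> svec i = (\<Sum>k\<in>{1..4}. x k * (svec k \<bullet> svec i))"
    by (simp add: W_def inner_sum_left)
  also have "\<dots> = (\<Sum>k\<in>{1..4}. (-1/3) * x k + (if k = i then 4/3 * x k else 0))"
    by (rule sum.cong) (use assms in \<open>auto simp: inner_svec_alt algebra_simps\<close>)
  also have "\<dots> = (\<Sum>k\<in>{1..4}. (-1/3) * x k) + (\<Sum>k\<in>{1..4}. (if k = i then 4/3 * x k else 0))"
    by (rule sum.distrib)
  also have "\<dots> = (-1/3) * S4 x + 4/3 * x i"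
    using assms by (simp add: sum_distrib_left[symmetric] S4_def sum_negf sum_divide_distrib[symmetric])
  finally show ?thesis by simp
qed

lemma W_inner_W: "W x \<bullet> W y = (\<Sum>k\<in>{1..4}. y k * (W x \<bullet> svec k))"
  by (simp add: W_def[of y] inner_sum_right)

lemma W_normsq: "W x \<bullet> W x = (4 * (\<Sum>k\<in>{1..4}. (x k)^2) - (S4 x)^2)/3"
proof -
  have "W x \<bullet> W x = (\<Sum>k\<in>{1..4}. x k * ((4 * x k - S4 x)/3))"
    by (simp add: W_inner_W W_inner)
  also have "\<dots> = (\<Sum>k\<in>{1..4}. (4/3) * (x k)^2 - (S4 x / 3) * x k)"
    by (rule sum.cong) (auto simp: field_simps power2_eq_square)
  also have "\<dots> = (4/3) * (\<Sum>k\<in>{1..4}. (x k)^2) - (S4 x / 3) * S4 x"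
    by (simp add: sum_subtractf sum_distrib_left S4_def)
  finally show ?thesis by (simp add: algebra_simps power2_eq_square)
qed

lemma W_const: "W (\<lambda>k. c) = 0"
proof -
  have "W (\<lambda>k. c) \<bullet> W (\<lambda>k. c) = 0"
    by (simp add: W_normsq S4_def four power2_eq_square)
  then show ?thesis by simp
qed

lemma W_lin: "W (\<lambda>k. a * x k + b * y k) = a *\<^sub>R W x + b *\<^sub>R W y"
  by (simp add: W_def scaleR_add_left sum.distrib scaleR_sum_right)

lemma W_zero: assumes "W x = 0" "i \<in> {1..4}" "j \<in> {1..4}" shows "x i = x j"
  using W_inner[of i x] W_inner[of j x] assms by simp

lemma W_eq: assumes "W x = W y" "i \<in> {1..4}" "j \<in> {1..4}" shows "x i - y i = x j - y j"
proof -
  have "W (\<lambda>k. x k - y k) = 0" using W_lin[of 1 x "-1" y] assms(1) by simp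
  from W_zero[OF this assms(2,3)] show ?thesis by simp
qed

lemma Tapply_W: "Tapply d v = W (\<lambda>k. (v \<bullet> svec k) ^ (d - 1))"
  by (simp add: Tapply_def W_def)

lemma frameW: "v = (3/4) *\<^sub>R W (\<lambda>k. v \<bullet> svec k)"
  using frame[of v] by (simp add: W_def)

lemma sum_p: "(\<Sum>k\<in>{1..4}. v \<bullet> svec k) = 0"
proof -
  have "(\<Sum>k\<in>{1..4}. v \<bullet> svec k) = v \<bullet> W (\<lambda>k. 1)"
    by (simp add: W_def inner_sum_right)
  then show ?thesis by (simp add: W_const)
qed

lemma sum_p2: "(\<Sum>k\<in>{1..4}. (v \<bullet> svec k)^2) = 4/3 * (v \<bullet> v)"
proof -
  have "v \<bullet> v = (3/4) * (\<Sum>k\<in>{1..4}. (v \<bullet> svec k) * (v \<bullet> svec k))"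
    by (subst (2) frameW) (simp add: W_def inner_sum_right sum_distrib_left)
  then show ?thesis by (simp add: power2_eq_square)
qed

lemma eig_val: assumes "norm v = 1" "is_eigenpair d v \<mu>" "d \<ge> 1"
  shows "\<mu> = (\<Sum>k\<in>{1..4}. (v \<bullet> svec k) ^ d)"
proof -
  have vv: "v \<bullet> v = 1" using assms(1) by (simp add: dot_square_norm)
  have "Tapply d v \<bullet> v = \<mu>" using assms(2) vv by (simp add: is_eigenpair_def)
  moreover have "Tapply d v \<bullet> v = (\<Sum>k\<in>{1..4}. (v \<bullet> svec k) ^ d)"
    unfolding Tapply_def inner_sum_left
  proof (rule sum.cong)
    fix k show "(v \<bullet> svec k) ^ (d - 1) *\<^sub>R svec k \<bullet> v = (v \<bullet> svec k) ^ d"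
      using assms(3) power_minus_mult[of d "v \<bullet> svec k"] by (simp add: inner_commute)
  qed simp
  ultimately show ?thesis by simp
qed

lemma W_cong: "(\<And>k. k \<in> {1..4} \<Longrightarrow> x k = y k) \<Longrightarrow> W x = W y"
  unfolding W_def by (rule sum.cong) auto

lemma IF_gen:
  assumes nz: "W y \<noteq> 0" and v: "v = (1 / norm (W y)) *\<^sub>R W y"
    and eq: "\<forall>j\<in>{1..4}. (v \<bullet> svec j)^(d-1) = l * y j + \<kappa>" and d: "d \<ge> 1"
  shows "norm v = 1" "is_eigenpair d v (l * norm (W y))"
    "\<forall>\<mu>. is_eigenpair d v \<mu> \<longleftrightarrow> \<mu> = (\<Sum>k\<in>{1..4}. (v \<bullet> svec k) ^ d)"
proof -
  have c: "norm (W y) > 0" using nz by simp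
  show n1: "norm v = 1" using c v by simp
  have "Tapply d v = W (\<lambda>k. l * y k + \<kappa> * 1)"
    unfolding Tapply_W by (rule W_cong) (use eq in auto)
  also have "\<dots> = l *\<^sub>R W y" using W_lin[of l y \<kappa> "\<lambda>k. 1"] by (simp add: W_const)
  also have "\<dots> = (l * norm (W y)) *\<^sub>R v" using v c by simp
  finally have T: "Tapply d v = (l * norm (W y)) *\<^sub>R v" .
  have v0: "v \<noteq> 0" using n1 by auto
  show e: "is_eigenpair d v (l * norm (W y))" using T v0 by (simp add: is_eigenpair_def)
  show "\<forall>\<mu>. is_eigenpair d v \<mu> \<longleftrightarrow> \<mu> = (\<Sum>k\<in>{1..4}. (v \<bullet> svec k) ^ d)"
  proof (intro allI iffI)
    fix \<mu> assume "is_eigenpair d v \<mu>" then show "\<mu> = (\<Sum>k\<in>{1..4}. (v \<bullet> svec k) ^ d)"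
      using eig_val n1 d by blast
  next
    fix \<mu> assume "\<mu> = (\<Sum>k\<in>{1..4}. (v \<bullet> svec k) ^ d)"
    then have "\<mu> = l * norm (W y)" using eig_val[OF n1 e d] by simp
    then show "is_eigenpair d v \<mu>" using e by simp
  qed
qed

lemma inner_normed: assumes "v = (1 / norm (W y)) *\<^sub>R W y" "j \<in> {1..4}"
  shows "v \<bullet> svec j = (4 * y j - S4 y) / (3 * norm (W y))"
proof -
  have "v \<bullet> svec j = (W y \<bullet> svec j) / norm (W y)" using assms(1) by simp
  then show ?thesis using W_inner[OF assms(2), of y] by simp
qed

definition yp :: "nat set \<Rightarrow> nat set \<Rightarrow> real \<Rightarrow> real \<Rightarrow> nat \<Rightarrow> real" where
  "yp K1 K2 a b j = (if j \<in> K1 then a else if j \<in> K2 then b else 0)"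

lemma sum_yp:
  assumes "K1 \<subseteq> {1..4}" "K2 \<subseteq> {1..4}" "K1 \<inter> K2 = {}"
  shows "(\<Sum>j\<in>{1..4}. f (yp K1 K2 a b j)) =
    real (card K1) * f a + real (card K2) * f b + (4 - real (card K1) - real (card K2)) * f 0"
proof -
  define R where "R = {1..4::nat} - K1 - K2"
  have U: "{1..4::nat} = K1 \<union> (K2 \<union> R)" using assms by (auto simp: R_def)
  have fin: "finite K1" "finite K2" "finite R"
    using assms finite_subset[of _ "{1..4::nat}"] by (auto simp: R_def)
  have cR: "card R = 4 - card K1 - card K2"
  proof -
    have "card {1..4::nat} = card K1 + card (K2 \<union> R)"
      unfolding U by (rule card_Un_disjoint) (use fin assms in \<open>auto simp: R_def\<close>)
    moreover have "card (K2 \<union> R) = card K2 + card R"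
      by (rule card_Un_disjoint) (use fin assms in \<open>auto simp: R_def\<close>)
    ultimately show ?thesis by simp
  qed
  have c4: "card K1 + card K2 \<le> 4"
  proof -
    have "card (K1 \<union> K2) \<le> card {1..4::nat}" by (rule card_mono) (use assms in auto)
    then show ?thesis using card_Un_disjoint[OF fin(1,2) assms(3)] by simp
  qed
  have "(\<Sum>j\<in>{1..4}. f (yp K1 K2 a b j)) = (\<Sum>j\<in>K1. f (yp K1 K2 a b j)) + ((\<Sum>j\<in>K2. f (yp K1 K2 a b j)) + (\<Sum>j\<in>R. f (yp K1 K2 a b j)))"
    unfolding U
    apply (subst sum.union_disjoint)
    using fin assms apply (auto simp: R_def)[3]
    apply (subst sum.union_disjoint)
    using fin assms apply (auto simp: R_def)
    done
  also have "\<dots> = (\<Sum>j\<in>K1. f a) + ((\<Sum>j\<in>K2. f b) + (\<Sum>j\<in>R. f 0))"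
  proof -
    have 1: "(\<Sum>j\<in>K1. f (yp K1 K2 a b j)) = (\<Sum>j\<in>K1. f a)" by (rule sum.cong) (auto simp: yp_def)
    have 2: "(\<Sum>j\<in>K2. f (yp K1 K2 a b j)) = (\<Sum>j\<in>K2. f b)" using assms(3) by (intro sum.cong) (auto simp: yp_def)
    have 3: "(\<Sum>j\<in>R. f (yp K1 K2 a b j)) = (\<Sum>j\<in>R. f 0)" by (rule sum.cong) (auto simp: yp_def R_def)
    show ?thesis using 1 2 3 by simp
  qed
  also have "\<dots> = real (card K1) * f a + real (card K2) * f b + (4 - real (card K1) - real (card K2)) * f 0"
    using cR c4 by (simp add: of_nat_diff)
  finally show ?thesis .
qed

lemma W_yp: assumes "K1 \<subseteq> {1..4}" "K2 \<subseteq> {1..4}" "K1 \<inter> K2 = {}"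
  shows "W (yp K1 K2 a b) = a *\<^sub>R (\<Sum>k\<in>K1. svec k) + b *\<^sub>R (\<Sum>k\<in>K2. svec k)"
proof -
  have fin: "finite K1" "finite K2" using assms finite_subset[of _ "{1..4::nat}"] by auto
  have "W (yp K1 K2 a b) = (\<Sum>k\<in>{1..4}. (if k \<in> K1 then a *\<^sub>R svec k else 0) + (if k \<in> K2 then b *\<^sub>R svec k else 0))"
    unfolding W_def by (rule sum.cong) (use assms in \<open>auto simp: yp_def\<close>)
  also have "\<dots> = (\<Sum>k\<in>{1..4}. (if k \<in> K1 then a *\<^sub>R svec k else 0)) + (\<Sum>k\<in>{1..4}. (if k \<in> K2 then b *\<^sub>R svec k else 0))"
    by (rule sum.distrib)
  also have "\<dots> = (\<Sum>k\<in>K1. a *\<^sub>R svec k) + (\<Sum>k\<in>K2. b *\<^sub>R svec k)"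
    using assms by (simp add: sum.If_cases Int_absorb1 Int_absorb2 inf_commute)
  finally show ?thesis by (simp add: scaleR_sum_right)
qed

lemma yK_facts:
  assumes K: "K \<subseteq> {1..4}"
  shows "W (yp K {} 1 0) = (\<Sum>k\<in>K. svec k)" "S4 (yp K {} 1 0) = real (card K)"
    "W (yp K {} 1 0) \<bullet> W (yp K {} 1 0) = real (card K) * (4 - real (card K)) / 3"
proof -
  show W: "W (yp K {} 1 0) = (\<Sum>k\<in>K. svec k)" using W_yp[OF K, of "{}" 1 0] by simp
  show S: "S4 (yp K {} 1 0) = real (card K)" using sum_yp[OF K, of "{}" "\<lambda>t. t" 1 0] by (simp add: S4_def)
  have "(\<Sum>k\<in>{1..4}. (yp K {} 1 0 k)^2) = real (card K)" using sum_yp[OF K, of "{}" "\<lambda>t. t^2" 1 0] by simp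
  then show "W (yp K {} 1 0) \<bullet> W (yp K {} 1 0) = real (card K) * (4 - real (card K)) / 3"
    by (simp add: W_normsq S power2_eq_square algebra_simps)
qed

lemma IF_a:
  assumes K: "K \<subseteq> {1..4}" "K \<noteq> {}" "card K \<le> 3" and d: "d \<ge> 1"
    and v: "v = (1 / sqrt (real (card K) * (4 - real (card K)) / 3)) *\<^sub>R (\<Sum>k\<in>K. svec k)"
  shows "norm v = 1"
    "\<forall>\<mu>. is_eigenpair d v \<mu> \<longleftrightarrow> \<mu> = (real (card K) * (4 - real (card K))^d + (4 - real (card K)) * (- real (card K))^d)
         / (3 * sqrt (real (card K) * (4 - real (card K)) / 3))^d"
proof -
  define y where "y = yp K {} 1 0"
  define m where "m = real (card K)"
  define c where "c = sqrt (m * (4 - m) / 3)"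
  have fin: "finite K" using K finite_subset by blast
  have m1: "m \<ge> 1" using K fin by (simp add: m_def Suc_le_eq card_gt_0_iff)
  have m3: "m \<le> 3" using K by (simp add: m_def)
  have P: "m * (4 - m) / 3 > 0" using m1 m3 by (simp add: mult_pos_pos)
  have Wy: "W y = (\<Sum>k\<in>K. svec k)" "S4 y = m" "W y \<bullet> W y = m * (4 - m) / 3"
    unfolding y_def m_def by (rule yK_facts[OF K(1)])+
  have nW: "norm (W y) = c" by (simp only: norm_eq_sqrt_inner Wy(3) c_def)
  have c0: "c > 0" using P by (simp add: c_def)
  have nz: "W y \<noteq> 0" using nW c0 by auto
  have vv: "v = (1 / norm (W y)) *\<^sub>R W y" unfolding nW unfolding Wy(1) c_def m_def by (rule v)
  have inn: "v \<bullet> svec j = (4 * y j - m) / (3 * c)" if "j \<in> {1..4}" for j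
    using inner_normed[OF vv that] by (simp only: Wy(2) nW)
  define \<alpha> where "\<alpha> = (4 - m) / (3 * c)"
  define \<beta> where "\<beta> = (- m) / (3 * c)"
  have eq: "\<forall>j\<in>{1..4}. (v \<bullet> svec j)^(d-1) = (\<alpha>^(d-1) - \<beta>^(d-1)) * y j + \<beta>^(d-1)"
    by (auto simp: inn y_def yp_def \<alpha>_def \<beta>_def)
  note G = IF_gen[OF nz vv eq d]
  show "norm v = 1" by (rule G(1))
  have "(\<Sum>j\<in>{1..4}. (v \<bullet> svec j)^d) = (\<Sum>j\<in>{1..4}. (\<lambda>t. ((4 * t - m) / (3 * c))^d) (yp K {} 1 0 j))"
    by (rule sum.cong) (auto simp: inn y_def)
  also have "\<dots> = m * ((4 - m) / (3 * c))^d + (4 - m) * ((- m) / (3 * c))^d"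
    using sum_yp[OF K(1), of "{}" "\<lambda>t. ((4 * t - m) / (3 * c))^d" 1 0] by (simp add: m_def)
  also have "\<dots> = (m * (4 - m)^d + (4 - m) * (- m)^d) / (3 * c)^d"
    by (simp only: power_divide add_divide_distrib times_divide_eq_right)
  finally show "\<forall>\<mu>. is_eigenpair d v \<mu> \<longleftrightarrow> \<mu> = (real (card K) * (4 - real (card K))^d + (4 - real (card K)) * (- real (card K))^d)
         / (3 * sqrt (real (card K) * (4 - real (card K)) / 3))^d"
    using G(3) by (simp add: m_def c_def)
qed

lemma muA_even:
  fixes m :: real
  assumes "even d" "d \<ge> 2" "1 \<le> m" "m \<le> 3"
  shows "(m * (4 - m)^d + (4 - m) * (- m)^d) / (3 * sqrt (m * (4 - m) / 3))^d
       = ((4 - m) ^ (d - 1) + m ^ (d - 1)) / (3 ^ (d div 2) * (m * (4 - m)) ^ (d div 2 - 1))"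
proof -
  obtain k where k: "d = 2 * k" using assms(1) by blast
  have k1: "k \<ge> 1" using assms(2) k by simp
  define P where "P = m * (4 - m)"
  have P0: "P > 0" using assms by (simp add: P_def)
  have s: "(3 * sqrt (m * (4 - m) / 3))^2 = 3 * P"
    using P0 by (simp add: power_mult_distrib P_def)
  have den: "(3 * sqrt (m * (4 - m) / 3))^d = 3^k * P * P^(k-1)"
  proof -
    have "(3 * sqrt (m * (4 - m) / 3))^d = ((3 * sqrt (m * (4 - m) / 3))^2)^k" by (simp add: k power_mult)
    also have "\<dots> = 3^k * P^k" unfolding s by (simp add: power_mult_distrib)
    also have "P^k = P * P^(k-1)" using k1 by (simp add: power_Suc[symmetric] del: power_Suc)
    finally show ?thesis by simp
  qed
  have num: "m * (4 - m)^d + (4 - m) * (- m)^d = P * ((4 - m) ^ (d - 1) + m ^ (d - 1))"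
  proof -
    have e1: "(- m)^d = m * m^(d-1)" using assms(1,2) by (simp add: power_Suc[symmetric] del: power_Suc)
    have e2: "(4 - m)^d = (4 - m) * (4-m)^(d-1)"
      using assms(2) by (simp add: power_Suc[symmetric] del: power_Suc)
    show ?thesis unfolding e1 e2 P_def by (simp add: algebra_simps)
  qed
  have dk: "d div 2 = k" using k by simp
  show ?thesis unfolding num den unfolding dk P_def[symmetric] using P0 by (simp add: field_simps)
qed

lemma muA_odd:
  fixes m :: real
  assumes "odd d" "d \<ge> 3" "1 \<le> m" "m \<le> 3"
  shows "(m * (4 - m)^d + (4 - m) * (- m)^d) / (3 * sqrt (m * (4 - m) / 3))^d
       = ((4 - m) ^ (d - 1) - m ^ (d - 1)) / (3 powr (real d / 2) * (m * (4 - m)) powr (real d / 2 - 1))"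
proof -
  define P where "P = m * (4 - m)"
  have P0: "P > 0" using assms by (simp add: P_def)
  have s: "3 * sqrt (m * (4 - m) / 3) = (3 * P) powr (1/2)"
  proof -
    have "sqrt (3 * P) = sqrt (9 * (P / 3))" by simp
    also have "\<dots> = 3 * sqrt (P / 3)"
    proof -
      have n9: "sqrt (9::real) = 3" using real_sqrt_abs[of 3] by simp
      show ?thesis by (simp only: real_sqrt_mult n9)
    qed
    finally have "3 * sqrt (P / 3) = sqrt (3 * P)" by simp
    then show ?thesis using P0 by (simp add: P_def powr_half_sqrt)
  qed
  have den: "(3 * sqrt (m * (4 - m) / 3))^d = 3 powr (real d / 2) * P powr (real d / 2 - 1) * P"
  proof -
    have "(3 * sqrt (m * (4 - m) / 3))^d = (3 * P) powr (real d / 2)"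
      unfolding s using P0 by (simp add: powr_realpow[symmetric] powr_powr)
    also have "\<dots> = 3 powr (real d / 2) * P powr (real d / 2)" using P0 by (simp add: powr_mult)
    also have "P powr (real d / 2) = P powr (real d / 2 - 1) * P"
    proof -
      have "P powr (real d / 2) = P powr ((real d / 2 - 1) + 1)" by simp
      also have "\<dots> = P powr (real d / 2 - 1) * P powr 1" by (rule powr_add)
      finally show ?thesis using P0 by simp
    qed
    finally show ?thesis by simp
  qed
  have num: "m * (4 - m)^d + (4 - m) * (- m)^d = P * ((4 - m) ^ (d - 1) - m ^ (d - 1))"
  proof -
    have e1: "(- m)^d = - (m * m^(d-1))" using assms(1,2) by (simp add: power_Suc[symmetric] del: power_Suc)
    have e2: "(4 - m)^d = (4 - m) * (4-m)^(d-1)"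
      using assms(2) by (simp add: power_Suc[symmetric] del: power_Suc)
    show ?thesis unfolding e1 e2 P_def by (simp add: algebra_simps)
  qed
  have pp: "P powr (real d / 2 - 1) > 0" using P0 by simp
  show ?thesis unfolding num den unfolding P_def[symmetric] using P0 pp by (simp add: field_simps)
qed



definition NN :: "nat \<Rightarrow> real \<Rightarrow> real" where
  "NN d t = (real d - 2) * t^(d-1) + (real d - 1) * t^(d-2) - 1"

lemma NN_neg: assumes "even d" "d \<ge> 4" "-1 < t" "t \<le> 0" shows "NN d t < 0"
proof -
  define n where "n = d - 2"
  define u where "u = - t"
  have u: "0 \<le> u" "u < 1" using assms by (auto simp: u_def)
  have n2: "n \<ge> 2" "even n" using assms by (auto simp: n_def)
  have tn: "t^(d-1) = - (u * u^n)" "t^(d-2) = u^n"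
  proof -
    have "d - 1 = Suc n" using assms by (simp add: n_def)
    then show "t^(d-1) = - (u * u^n)" using n2 by (simp add: u_def)
    show "t^(d-2) = u^n" using n2 by (simp add: u_def n_def)
  qed
  have NN: "NN d t = u^n * ((real n + 1) - real n * u) - 1"
    unfolding NN_def tn using assms by (simp add: n_def of_nat_diff algebra_simps)
  show ?thesis
  proof (cases "u = 0")
    case True then show ?thesis using n2 by (simp add: NN power_0_left)
  next
    case False
    then have u0: "u > 0" using u by simp
    define w where "w = 1 / u"
    have w1: "w > 1" using u u0 by (simp add: w_def)
    have B: "1 + real n * (w - 1) \<le> w^n"
      using Bernoulli_inequality[of "w - 1" n] w1 by simp
    have key: "(real n + 1) - real n * u < 1 + real n * (w - 1)"
    proof -
      have "real n * (w + u - 2) > 0"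
      proof -
        have "w + u - 2 = (w - 1)^2 / w" using w1 u0 by (simp add: w_def field_simps power2_eq_square)
        moreover have "(w - 1)^2 / w > 0" using w1 by simp
        moreover have "real n > 0" using n2 by simp
        ultimately show ?thesis by (metis mult_pos_pos)
      qed
      then show ?thesis by (simp add: algebra_simps)
    qed
    have "u^n * ((real n + 1) - real n * u) < u^n * w^n"
      using key B u0 by (intro mult_strict_left_mono) auto
    also have "u^n * w^n = 1" using u0 by (simp add: w_def power_one_over[symmetric] power_mult_distrib[symmetric])
    finally show ?thesis by (simp add: NN)
  qed
qed

lemma NN_mono: assumes "d \<ge> 4" "0 \<le> s" "s < t" shows "NN d s < NN d t"
proof -
  have "s^(d-1) < t^(d-1)" using assms by (intro power_strict_mono) auto
  moreover have "s^(d-2) < t^(d-2)" using assms by (intro power_strict_mono) auto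
  moreover have "real d - 2 > 0" "real d - 1 > 0" using assms by auto
  ultimately have "(real d - 2) * s^(d-1) < (real d - 2) * t^(d-1)"
    "(real d - 1) * s^(d-2) < (real d - 1) * t^(d-2)"
    by (intro mult_strict_left_mono; simp)+
  then show ?thesis unfolding NN_def by linarith
qed

lemma pow3_bound: "4 * k + 3 \<le> (3::nat)^(k+1)"
  by (induction k) auto

lemma NN_third: assumes "d \<ge> 4" shows "NN d (1/3) \<le> 0"
proof -
  obtain k where k: "d = k + 4" using assms by (metis add.commute le_Suc_ex)
  have "4 * (k + 2) + 3 \<le> (3::nat)^(k+3)" using pow3_bound[of "k+2"] by (simp add: algebra_simps power_add)
  then have "real (4 * (k + 2) + 3) \<le> real ((3::nat)^(k+3))" by (simp only: of_nat_le_iff)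
  then have b: "4 * (real k + 2) + 3 \<le> 27 * 3^k" by (simp add: power_add)
  have p: "(1/3::real)^(k+3) = 1/(27*3^k)" "(1/3::real)^(k+2) = 1/(9*3^k)"
    by (simp_all add: power_add power_divide)
  have "NN d (1/3) = (real k + 2) * (1/(27*3^k)) + (real k + 3) * (1/(9*3^k)) - 1"
    unfolding NN_def k by (simp add: p[symmetric] numeral_eq_Suc add.commute)
  also have "\<dots> = (4 * (real k + 2) + 3) / (27 * 3^k) - 1" by (simp add: field_simps)
  also have "\<dots> \<le> 0" using b by (simp add: field_simps)
  finally show ?thesis .
qed

lemma NN_root: assumes "even d" "d \<ge> 4"
  shows "\<exists>t0. 1/3 \<le> t0 \<and> t0 < 1 \<and> NN d t0 = 0"
proof -
  have c: "continuous_on {1/3..1} (NN d)" unfolding NN_def by (intro continuous_intros)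
  have n1: "NN d 1 > 0" using assms by (simp add: NN_def)
  obtain t0 where t0: "1/3 \<le> t0" "t0 \<le> 1" "NN d t0 = 0"
    using IVT'[of "NN d" "1/3" 0 1, OF NN_third[OF assms(2)] _ _ c] n1 by auto
  have "t0 \<noteq> 1" using t0 n1 by auto
  then show ?thesis using t0 by auto
qed

lemma gfun_even: "even d \<Longrightarrow> d \<ge> 2 \<Longrightarrow> gfun d s = (4 * s-1)^(d-1) + 1"
  by (simp add: gfun_def)

lemma NN_alt: assumes "d \<ge> 2" shows "real (d-1) * t^(d-2) * (t+1) - t^(d-1) - 1 = NN d t"
proof -
  have e: "d - 1 = Suc (d - 2)" using assms by simp
  have "t^(d-1) = t * t^(d-2)" unfolding e by simp
  then show ?thesis unfolding NN_def using assms by (simp add: of_nat_diff algebra_simps)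
qed

lemma f_deriv: assumes "d \<ge> 2" "s > 0"
  shows "((\<lambda>s. ((4 * s-1)^(d-1) + 1) / s) has_real_derivative NN d (4 * s-1) / s^2) (at s)"
proof -
  have "((\<lambda>s. ((4 * s-1)^(d-1) + 1) / s) has_real_derivative
      ((real (d-1) * (4 * s-1)^(d-1-1) * (4*1-0) + 0) * s - ((4 * s-1)^(d-1) + 1) * 1) / (s * s)) (at s)"
    using assms by (intro derivative_eq_intros refl) auto
  moreover have "((real (d-1) * (4 * s-1)^(d-1-1) * (4*1-0) + 0) * s - ((4 * s-1)^(d-1) + 1) * 1) / (s * s)
      = NN d (4 * s-1) / s^2"
  proof -
    have "d - 1 - 1 = d - 2" by simp
    then have "(real (d-1) * (4 * s-1)^(d-1-1) * (4*1-0) + 0) * s - ((4 * s-1)^(d-1) + 1) * 1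
        = real (d-1) * (4 * s-1)^(d-2) * ((4 * s-1)+1) - (4 * s-1)^(d-1) - 1" by (simp add: algebra_simps)
    also have "\<dots> = NN d (4 * s-1)" by (rule NN_alt[OF assms(1)])
    finally show ?thesis by (simp add: power2_eq_square)
  qed
  ultimately show ?thesis by simp
qed

definition sprop :: "nat \<Rightarrow> real \<Rightarrow> bool" where
  "sprop d s \<longleftrightarrow> 1/3 \<le> s \<and> s < 1/2 \<and>
     (\<forall>x\<in>{0<..s}. \<forall>y\<in>{0<..s}. x < y \<longrightarrow> gfun d y / y < gfun d x / x) \<and>
     (\<forall>x\<in>{s..}. \<forall>y\<in>{s..}. x < y \<longrightarrow> gfun d x / x < gfun d y / y)"

lemma sprop_unique: assumes "sprop d s1" "sprop d s2" shows "s1 = s2"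
proof (rule ccontr)
  assume "s1 \<noteq> s2"
  then consider "s1 < s2" | "s2 < s1" by linarith
  then show False
  proof cases
    case 1
    have p: "s1 > 0" using assms(1) by (simp add: sprop_def)
    have "gfun d s2 / s2 < gfun d s1 / s1" using assms(2) 1 p unfolding sprop_def by auto
    moreover have "gfun d s1 / s1 < gfun d s2 / s2" using assms(1) 1 unfolding sprop_def by auto
    ultimately show False by simp
  next
    case 2
    have p: "s2 > 0" using assms(2) by (simp add: sprop_def)
    have "gfun d s1 / s1 < gfun d s2 / s2" using assms(1) 2 p unfolding sprop_def by auto
    moreover have "gfun d s2 / s2 < gfun d s1 / s1" using assms(2) 2 unfolding sprop_def by auto
    ultimately show False by simp
  qed
qed

lemma sprop_exists: assumes "even d" "d \<ge> 4" shows "\<exists>s. sprop d s"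
proof -
  obtain t0 where t0: "1/3 \<le> t0" "t0 < 1" "NN d t0 = 0" using NN_root[OF assms] by blast
  define s0 where "s0 = (1 + t0) / 4"
  define f where "f = (\<lambda>s::real. ((4 * s - 1)^(d-1) + 1) / s)"
  have fg: "gfun d s / s = f s" for s using assms by (simp add: f_def gfun_even)
  have der: "(f has_real_derivative NN d (4 * s - 1) / s^2) (at s)" if "s > 0" for s
    unfolding f_def using f_deriv[OF _ that] assms by simp
  have cont: "continuous_on {x..y} f" if "x > 0" for x y
    unfolding f_def using that by (intro continuous_intros) auto
  have neg: "NN d (4 * z - 1) < 0" if "0 < z" "z < s0" for z
  proof (cases "4 * z - 1 \<le> 0")
    case True then show ?thesis using NN_neg[OF assms, of "4 * z - 1"] that by simp
  next
    case False
    then have "NN d (4 * z - 1) < NN d t0" using that assms by (intro NN_mono) (auto simp: s0_def)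
    then show ?thesis using t0 by simp
  qed
  have pos: "NN d (4 * z - 1) > 0" if "s0 < z" for z
  proof -
    have "NN d t0 < NN d (4 * z - 1)" using that assms t0 by (intro NN_mono) (auto simp: s0_def)
    then show ?thesis using t0 by simp
  qed
  have "sprop d s0"
    unfolding sprop_def fg
  proof (intro conjI ballI impI)
    show "1/3 \<le> s0" "s0 < 1/2" using t0 by (auto simp: s0_def)
  next
    fix x y assume xy: "x \<in> {0<..s0}" "y \<in> {0<..s0}" "x < y"
    show "f y < f x"
    proof (rule DERIV_neg_imp_decreasing_open[OF xy(3)])
      fix z assume z: "x < z" "z < y"
      then have "z > 0" "z < s0" using xy by auto
      then show "\<exists>D. (f has_real_derivative D) (at z) \<and> D < 0"
        using der[of z] neg[of z] by (intro exI[of _ "NN d (4 * z - 1) / z^2"]) (auto simp: divide_neg_pos)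
    next
      show "continuous_on {x..y} f" using cont xy by auto
    qed
  next
    fix x y assume xy: "x \<in> {s0..}" "y \<in> {s0..}" "x < y"
    have s00: "s0 > 0" using t0 by (simp add: s0_def)
    show "f x < f y"
    proof (rule DERIV_pos_imp_increasing_open[OF xy(3)])
      fix z assume z: "x < z" "z < y"
      then have "z > 0" "s0 < z" using xy s00 by auto
      then show "\<exists>D. (f has_real_derivative D) (at z) \<and> D > 0"
        using der[of z] pos[of z] by (intro exI[of _ "NN d (4 * z - 1) / z^2"]) auto
    next
      show "continuous_on {x..y} f" using cont xy s00 by auto
    qed
  qed
  then show ?thesis by blast
qed

lemma s_star_prop: assumes "even d" "d \<ge> 4" shows "sprop d (s_star d)"
proof -
  obtain s where s: "sprop d s" using sprop_exists[OF assms] by blast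
  have e: "s_star d = (THE s. sprop d s)" unfolding s_star_def sprop_def by simp
  have "s_star d = s"
    unfolding e by (rule the_equality[where P="sprop d", OF s]) (use sprop_unique s in blast)
  then show ?thesis using s by simp
qed



lemma G_norm: assumes "norm v = 1" "v = t *\<^sub>R W y" "t > 0"
  shows "v = (1 / norm (W y)) *\<^sub>R W y"
proof -
  have "t * norm (W y) = 1" using assms by simp
  moreover have "norm (W y) \<noteq> 0" using assms by auto
  ultimately have "t = 1 / norm (W y)" by (simp add: field_simps)
  then show ?thesis using assms(2) by simp
qed

lemma form_a:
  assumes K: "K \<subseteq> {1..4}" and n: "norm v = 1" and v: "v = (3/4) *\<^sub>R W p"
    and p: "\<forall>j\<in>{1..4}. p j = \<beta> + t * yp K {} 1 0 j" and t: "t > 0"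
  shows "v = (1 / sqrt (real (card K) * (4 - real (card K)) / 3)) *\<^sub>R (\<Sum>k\<in>K. svec k)"
proof -
  have "W p = W (\<lambda>j. \<beta> * 1 + t * yp K {} 1 0 j)" by (rule W_cong) (use p in auto)
  also have "\<dots> = t *\<^sub>R W (yp K {} 1 0)" using W_lin[of \<beta> "\<lambda>j. 1" t] by (simp add: W_const)
  finally have "v = (3/4 * t) *\<^sub>R W (yp K {} 1 0)" using v by simp
  from G_norm[OF n this] t have "v = (1 / norm (W (yp K {} 1 0))) *\<^sub>R W (yp K {} 1 0)" by simp
  moreover have "norm (W (yp K {} 1 0)) = sqrt (real (card K) * (4 - real (card K)) / 3)"
    by (simp only: norm_eq_sqrt_inner yK_facts(3)[OF K])
  ultimately show ?thesis by (simp only: yK_facts(1)[OF K])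
qed

lemma ONLYIF_basic:
  assumes n: "norm v = 1" and e: "is_eigenpair d v \<mu>"
  shows "S4 (\<lambda>k. v \<bullet> svec k) = 0" "(\<Sum>k\<in>{1..4}. (v \<bullet> svec k)^2) = 4/3"
    "v = (3/4) *\<^sub>R W (\<lambda>k. v \<bullet> svec k)"
    "\<forall>j\<in>{1..4}. (v \<bullet> svec j)^(d-1) - (3/4*\<mu>) * (v \<bullet> svec j) = (v \<bullet> svec 1)^(d-1) - (3/4*\<mu>) * (v \<bullet> svec 1)"
proof -
  show "S4 (\<lambda>k. v \<bullet> svec k) = 0" using sum_p by (simp add: S4_def)
  have vv: "v \<bullet> v = 1" using n by (simp add: dot_square_norm)
  show "(\<Sum>k\<in>{1..4}. (v \<bullet> svec k)^2) = 4/3" using sum_p2[of v] vv by simp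
  show "v = (3/4) *\<^sub>R W (\<lambda>k. v \<bullet> svec k)" by (rule frameW)
  have "W (\<lambda>k. (v \<bullet> svec k)^(d-1)) = \<mu> *\<^sub>R v" using e by (simp add: is_eigenpair_def Tapply_W)
  also have "\<dots> = W (\<lambda>k. (3/4*\<mu>) * (v \<bullet> svec k) + 0 * 0)"
    using W_lin[of "3/4*\<mu>" "\<lambda>k. v \<bullet> svec k" 0 "\<lambda>k. 0"] arg_cong[OF frameW[of v], of "\<lambda>z. \<mu> *\<^sub>R z"] by simp
  finally have WW: "W (\<lambda>k. (v \<bullet> svec k)^(d-1)) = W (\<lambda>k. (3/4*\<mu>) * (v \<bullet> svec k) + 0 * 0)" .
  show "\<forall>j\<in>{1..4}. (v \<bullet> svec j)^(d-1) - (3/4*\<mu>) * (v \<bullet> svec j) = (v \<bullet> svec 1)^(d-1) - (3/4*\<mu>) * (v \<bullet> svec 1)"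
  proof
    fix j :: nat assume jj: "j \<in> {1..4}"
    have "(1::nat) \<in> {1..4}" by simp
    from W_eq[OF WW jj this] show "(v \<bullet> svec j)^(d-1) - (3/4*\<mu>) * (v \<bullet> svec j) = (v \<bullet> svec 1)^(d-1) - (3/4*\<mu>) * (v \<bullet> svec 1)"
      by simp
  qed
qed

lemma odd_power_strict: assumes "odd n" "(a::real) < b" shows "a^n < b^n"
proof -
  have "a^n \<le> b^n" using power_mono_odd[OF assms(1), of a b] assms(2) by simp
  moreover have "a^n \<noteq> b^n"
  proof
    assume "a^n = b^n"
    then have "root n (a^n) = root n (b^n)" by simp
    then show False using odd_real_root_power_cancel[OF assms(1)] assms(2) by simp
  qed
  ultimately show ?thesis by simp
qed

lemma three_roots:
  fixes x1 x2 x3 l C :: real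
  assumes "odd d" "d \<ge> 3" "x1 < x2" "x2 < x3"
    and q: "x1^(d-1) - l * x1 = C" "x2^(d-1) - l * x2 = C" "x3^(d-1) - l * x3 = C"
  shows False
proof -
  define q where "q = (\<lambda>x::real. x^(d-1) - l * x)"
  define q' where "q' = (\<lambda>x::real. real (d-1) * x^(d-2) - l)"
  have der: "DERIV q x :> q' x" for x
    unfolding q_def q'_def by (auto intro!: derivative_eq_intros simp: diff_diff_left numeral_2_eq_2)
  obtain z1 where z1: "x1 < z1" "z1 < x2" "q x2 - q x1 = (x2 - x1) * q' z1"
    using MVT2[OF assms(3), of q q'] der by blast
  obtain z2 where z2: "x2 < z2" "z2 < x3" "q x3 - q x2 = (x3 - x2) * q' z2"
    using MVT2[OF assms(4), of q q'] der by blast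
  have "q' z1 = 0" using z1 q assms(3) by (simp add: q_def)
  moreover have "q' z2 = 0" using z2 q assms(4) by (simp add: q_def)
  moreover have "z1^(d-2) < z2^(d-2)" using z1 z2 assms(1,2) by (intro odd_power_strict) auto
  moreover have "real (d-1) > 0" using assms by simp
  ultimately have "real (d-1) * z1^(d-2) < real (d-1) * z2^(d-2)" "q' z1 = 0" "q' z2 = 0"
    by (auto intro: mult_strict_left_mono)
  then show False unfolding q'_def by linarith
qed

lemma minmax4:
  fixes p :: "nat \<Rightarrow> real"
  obtains ja jb where "ja \<in> {1..4}" "jb \<in> {1..4}" "\<forall>j\<in>{1..4}. p jb \<le> p j \<and> p j \<le> p ja"
proof -
  have f: "finite (p ` {1..4})" "p ` {1..4} \<noteq> {}" by auto
  obtain ja where ja0: "ja \<in> {1..4}" "Max (p ` {1..4}) = p ja" using Max_in[OF f] by blast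
  obtain jb where jb0: "jb \<in> {1..4}" "Min (p ` {1..4}) = p jb" using Min_in[OF f] by blast
  have ja: "ja \<in> {1..4}" "p ja = Max (p ` {1..4})" using ja0 by auto
  have jb: "jb \<in> {1..4}" "p jb = Min (p ` {1..4})" using jb0 by auto
  show ?thesis using that[OF ja(1) jb(1)] ja jb f by auto
qed

lemma card_lt4: assumes "K \<subseteq> {1..4::nat}" "j \<in> {1..4}" "j \<notin> K" shows "card K \<le> 3"
proof -
  have "K \<subset> {1..4}" using assms by auto
  then have "card K < card {1..4::nat}" using psubset_card_mono[of "{1..4::nat}" K] by simp
  then show ?thesis by simp
qed

lemma p_not_all_zero:
  fixes p :: "nat \<Rightarrow> real"
  assumes "(\<Sum>k\<in>{1..4}. (p k)^2) = (4/3::real)"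
  shows "\<exists>j\<in>{1..4}. p j \<noteq> 0"
proof (rule ccontr)
  assume "\<not> ?thesis"
  then have "(\<Sum>k\<in>{1..4}. (p k)^2) = 0" by simp
  then show False using assms by simp
qed

lemma odd_onlyif:
  assumes d: "odd d" "d \<ge> 3" and n: "norm v = 1" and e: "is_eigenpair d v \<mu>"
  shows "\<exists>K. K \<subseteq> {1..4} \<and> K \<noteq> {} \<and> card K \<le> 3 \<and>
     v = (1 / sqrt (real (card K) * (4 - real (card K)) / 3)) *\<^sub>R (\<Sum>k\<in>K. svec k)"
proof -
  define p where "p = (\<lambda>k. v \<bullet> svec k)"
  note B = ONLYIF_basic[OF n e, folded p_def]
  obtain ja jb where j: "ja \<in> {1..4}" "jb \<in> {1..4}" "\<forall>j\<in>{1..4}. p jb \<le> p j \<and> p j \<le> p ja"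
    using minmax4 by blast
  define \<alpha> where "\<alpha> = p ja"
  define \<beta> where "\<beta> = p jb"
  define C where "C = (p 1)^(d-1) - (3/4*\<mu>) * p 1"
  have eqC: "(p j)^(d-1) - (3/4*\<mu>) * p j = C" if "j \<in> {1..4}" for j using bspec[OF B(4) that] unfolding p_def C_def by simp
  have two: "p j = \<alpha> \<or> p j = \<beta>" if jj: "j \<in> {1..4}" for j
  proof (rule ccontr)
    assume "\<not> ?thesis"
    then have "\<beta> < p j" "p j < \<alpha>" using j jj by (auto simp: \<alpha>_def \<beta>_def less_le)
    then show False using three_roots[OF d, of \<beta> "p j" \<alpha> "3/4*\<mu>" C] eqC[OF jj] eqC[OF j(1)] eqC[OF j(2)]
      by (simp add: \<alpha>_def \<beta>_def)
  qed
  have ab: "\<beta> < \<alpha>"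
  proof (rule ccontr)
    assume "\<not> \<beta> < \<alpha>"
    then have all: "p j = \<beta>" if "j \<in> {1..4}" for j using j that by (force simp: \<alpha>_def \<beta>_def)
    have "S4 p = 4 * \<beta>" unfolding S4_def using all by (simp add: four)
    then have "\<beta> = 0" using B(1) by simp
    then show False using p_not_all_zero[OF B(2)] all by (auto simp: p_def)
  qed
  define K where "K = {j \<in> {1..4}. p j = \<alpha>}"
  have K: "K \<subseteq> {1..4}" "ja \<in> K" "jb \<notin> K" using j ab by (auto simp: K_def \<alpha>_def \<beta>_def)
  have pK: "\<forall>j\<in>{1..4}. p j = \<beta> + (\<alpha> - \<beta>) * yp K {} 1 0 j"
  proof
    fix j :: nat assume jj: "j \<in> {1..4}"
    show "p j = \<beta> + (\<alpha> - \<beta>) * yp K {} 1 0 j" using two[OF jj] jj by (auto simp: yp_def K_def)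
  qed
  have "v = (1 / sqrt (real (card K) * (4 - real (card K)) / 3)) *\<^sub>R (\<Sum>k\<in>K. svec k)"
    using form_a[OF K(1) n B(3) pK] ab by simp
  moreover have "K \<noteq> {}" using K by auto
  moreover have "card K \<le> 3" using card_lt4[OF K(1) j(2) K(3)] .
  ultimately show ?thesis using K by blast
qed

lemma form_w:
  assumes n: "norm v = 1" and v: "v = (3/4) *\<^sub>R W p"
    and p: "\<forall>j\<in>{1..4}. p j = \<beta> + t * y j" and t: "t > 0"
  shows "v = (1 / norm (W y)) *\<^sub>R W y"
proof -
  have "W p = W (\<lambda>j. \<beta> * 1 + t * y j)" by (rule W_cong) (use p in auto)
  also have "\<dots> = t *\<^sub>R W y" using W_lin[of \<beta> "\<lambda>j. 1" t] by (simp add: W_const)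
  finally have "v = (3/4 * t) *\<^sub>R W y" using v by simp
  from G_norm[OF n this] t show ?thesis by simp
qed

lemma even_onlyif:
  assumes d: "even d" "d \<ge> 4" and n: "norm v = 1" and e: "is_eigenpair d v \<mu>"
  shows "(\<exists>K. K \<subseteq> {1..4} \<and> K \<noteq> {} \<and> card K \<le> 3 \<and>
             v = (1 / sqrt (real (card K) * (4 - real (card K)) / 3)) *\<^sub>R (\<Sum>k\<in>K. svec k))
     \<or> (\<exists>K1 K2 a b. K1 \<subseteq> {1..4} \<and> K2 \<subseteq> {1..4} \<and> K1 \<noteq> {} \<and> K2 \<noteq> {} \<and>
             K1 \<inter> K2 = {} \<and> card (K1 \<union> K2) \<le> 3 \<and>
             0 < a \<and> a \<le> s_star d \<and> s_star d < b \<and> b \<le> 1 \<and>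
             real (card K1) * a + real (card K2) * b = 1 \<and>
             gfun d a / a = gfun d b / b \<and>
             v = (1 / sqrt ((4 * a\<^sup>2 * real (card K1) + 4 * b\<^sup>2 * real (card K2) - 1) / 3)) *\<^sub>R
                   (a *\<^sub>R (\<Sum>k\<in>K1. svec k) + b *\<^sub>R (\<Sum>k\<in>K2. svec k)))"
proof -
  define p where "p = (\<lambda>k. v \<bullet> svec k)"
  note B = ONLYIF_basic[OF n e, folded p_def]
  define l where "l = 3/4*\<mu>"
  define C where "C = (p 1)^(d-1) - l * p 1"
  have eqC: "(p j)^(d-1) - l * p j = C" if "j \<in> {1..4}" for j
    using bspec[OF B(4) that] unfolding p_def C_def l_def by simp
  obtain ja0 jm where j: "ja0 \<in> {1..4}" "jm \<in> {1..4}" "\<forall>j\<in>{1..4}. p jm \<le> p j \<and> p j \<le> p ja0"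
    using minmax4 by blast
  define Bb where "Bb = - p jm"
  have Bb: "Bb > 0"
  proof (rule ccontr)
    assume "\<not> Bb > 0"
    then have nn: "\<forall>j\<in>{1..4}. 0 \<le> p j" using j by (auto simp: Bb_def)
    have "\<forall>j\<in>{1..4}. p j = 0" using B(1) nn unfolding S4_def by (subst (asm) sum_nonneg_eq_0_iff) auto
    then show False using p_not_all_zero[OF B(2)] by (auto simp: p_def)
  qed
  define x where "x = (\<lambda>j. (p j + Bb) / (4 * Bb))"
  have x0: "x j \<ge> 0" if "j \<in> {1..4}" for j
  proof -
    have "p j + Bb \<ge> 0" using j that by (auto simp: Bb_def)
    then show ?thesis using Bb by (simp add: x_def)
  qed
  have xm: "x jm = 0" by (simp add: x_def Bb_def)
  have px: "p j = - Bb + (4 * Bb) * x j" for j using Bb by (simp add: x_def field_simps)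
  have Sx: "S4 x = 1"
  proof -
    have "S4 x = (\<Sum>j\<in>{1..4}. p j + Bb) / (4 * Bb)" by (simp add: S4_def x_def sum_divide_distrib)
    also have "(\<Sum>j\<in>{1..4}. p j + Bb) = S4 p + 4 * Bb" by (simp add: sum.distrib S4_def)
    finally show ?thesis using B(1) Bb by simp
  qed
  define \<Lambda> where "\<Lambda> = 4 * l / Bb^(d-2)"
  have gx: "gfun d (x j) = \<Lambda> * x j" if jj: "j \<in> {1..4}" for j
  proof -
    have e1: "d - 1 = Suc (d - 2)" using d by simp
    have pe: "p j ^ (d-1) = Bb^(d-1) * (4 * x j - 1)^(d-1)"
      by (simp add: px power_mult_distrib[symmetric] algebra_simps)
    have pm: "p jm ^ (d-1) = - (Bb^(d-1))" using d by (simp add: Bb_def)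
    have "Bb^(d-1) * ((4 * x j - 1)^(d-1) + 1) = l * (p j + Bb)"
      using eqC[OF jj] eqC[OF j(2)] pe pm by (simp add: Bb_def algebra_simps)
    also have "\<dots> = Bb^(d-1) * (\<Lambda> * x j)"
      unfolding \<Lambda>_def e1 using Bb by (simp add: px field_simps)
    finally have "Bb^(d-1) * gfun d (x j) = Bb^(d-1) * (\<Lambda> * x j)"
      using d by (simp add: gfun_even)
    then show ?thesis using Bb by simp
  qed
  define Pos where "Pos = {j \<in> {1..4}. x j > 0}"
  have fP: "finite Pos" by (simp add: Pos_def)
  have Pne: "Pos \<noteq> {}"
  proof
    assume "Pos = {}"
    then have "\<forall>j\<in>{1..4}. x j = 0" using x0 by (force simp: Pos_def)
    then have "S4 x = 0" by (simp add: S4_def)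
    then show False using Sx by simp
  qed
  have fPi: "finite (x ` Pos)" "x ` Pos \<noteq> {}" using fP Pne by auto
  obtain ja where ja: "ja \<in> Pos" "Min (x ` Pos) = x ja" using Min_in[OF fPi] by blast
  obtain jb where jb: "jb \<in> Pos" "Max (x ` Pos) = x jb" using Max_in[OF fPi] by blast
  define a where "a = x ja"
  define b where "b = x jb"
  have abnd: "a \<le> x j \<and> x j \<le> b" if "j \<in> Pos" for j
  proof -
    have "Min (x ` Pos) \<le> x j" by (rule Min_le) (use fPi that in auto)
    moreover have "x j \<le> Max (x ` Pos)" by (rule Max_ge) (use fPi that in auto)
    ultimately show ?thesis using ja jb by (simp add: a_def b_def)
  qed
  have a0: "a > 0" using ja by (simp add: a_def Pos_def)
  have jmP: "jm \<notin> Pos" using xm by (simp add: Pos_def)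
  have xout: "x j = 0" if "j \<in> {1..4}" "j \<notin> Pos" for j using x0[OF that(1)] that by (simp add: Pos_def)
  have fv: "gfun d (x j) / x j = \<Lambda>" if "j \<in> Pos" for j using gx[of j] that by (simp add: Pos_def)
  show ?thesis
  proof (cases "a = b")
    case True
    define K where "K = Pos"
    have K: "K \<subseteq> {1..4}" by (auto simp: K_def Pos_def)
    have pK: "\<forall>j\<in>{1..4}. p j = - Bb + (4 * Bb * a) * yp K {} 1 0 j"
    proof
      fix j :: nat assume jj: "j \<in> {1..4}"
      show "p j = - Bb + (4 * Bb * a) * yp K {} 1 0 j"
      proof (cases "j \<in> Pos")
        case True then have "x j = a" using abnd[OF True] \<open>a = b\<close> by simp
        then show ?thesis using True by (simp add: px yp_def K_def)
      next
        case False then show ?thesis using xout[OF jj False] by (simp add: px yp_def K_def)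
      qed
    qed
    have "v = (1 / sqrt (real (card K) * (4 - real (card K)) / 3)) *\<^sub>R (\<Sum>k\<in>K. svec k)"
      using form_a[OF K n B(3) pK] Bb a0 by simp
    moreover have "K \<noteq> {}" using Pne by (simp add: K_def)
    moreover have "card K \<le> 3" using card_lt4[OF K j(2)] jmP by (simp add: K_def)
    ultimately show ?thesis using K by blast
  next
    case False
    then have ab: "a < b" using abnd[OF ja(1)] by (simp add: a_def)
    have fa: "gfun d a / a = gfun d b / b" using fv[OF ja(1)] fv[OF jb(1)] by (simp add: a_def b_def)
    have sp: "sprop d (s_star d)" by (rule s_star_prop[OF d])
    have b0: "b > 0" using a0 ab by simp
    have sb: "s_star d < b"
    proof (rule ccontr)
      assume "\<not> s_star d < b"
      then have "gfun d b / b < gfun d a / a" using sp a0 ab unfolding sprop_def by auto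
      then show False using fa by simp
    qed
    have as: "a \<le> s_star d"
    proof (rule ccontr)
      assume "\<not> a \<le> s_star d"
      then have "gfun d a / a < gfun d b / b" using sp a0 ab unfolding sprop_def by auto
      then show False using fa by simp
    qed
    have twov: "x j = a \<or> x j = b" if jP: "j \<in> Pos" for j
    proof (rule ccontr)
      assume "\<not> ?thesis"
      then have lt: "a < x j" "x j < b" using abnd[OF jP] by auto
      have fj: "gfun d (x j) / x j = gfun d a / a" using fv[OF jP] fv[OF ja(1)] by (simp add: a_def)
      show False
      proof (cases "x j \<le> s_star d")
        case True
        then have "gfun d (x j) / x j < gfun d a / a" using sp a0 lt unfolding sprop_def by auto
        then show False using fj by simp
      next
        case False
        then have "gfun d (x j) / x j < gfun d b / b" using sp lt unfolding sprop_def by auto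
        then show False using fj fa by simp
      qed
    qed
    define K1 where "K1 = {j \<in> {1..4}. x j = a}"
    define K2 where "K2 = {j \<in> {1..4}. x j = b}"
    have K12: "K1 \<subseteq> {1..4}" "K2 \<subseteq> {1..4}" "K1 \<inter> K2 = {}" using ab by (auto simp: K1_def K2_def)
    have K1n: "K1 \<noteq> {}" using ja by (auto simp: K1_def a_def Pos_def)
    have K2n: "K2 \<noteq> {}" using jb by (auto simp: K2_def b_def Pos_def)
    have cU: "card (K1 \<union> K2) \<le> 3"
      by (rule card_lt4[OF _ j(2)]) (use K12 xm a0 b0 in \<open>auto simp: K1_def K2_def\<close>)
    define y where "y = yp K1 K2 a b"
    have xy: "x j = y j" if jj: "j \<in> {1..4}" for j
    proof (cases "j \<in> Pos")
      case True then show ?thesis using twov[OF True] ab jj by (auto simp: y_def yp_def K1_def K2_def)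
    next
      case False then show ?thesis using xout[OF jj False] a0 b0 jj by (auto simp: y_def yp_def K1_def K2_def)
    qed
    have Sy: "real (card K1) * a + real (card K2) * b = 1"
    proof -
      have "S4 x = S4 y" unfolding S4_def by (rule sum.cong) (use xy in auto)
      then show ?thesis using Sx sum_yp[OF K12, of "\<lambda>t. t" a b] by (simp add: S4_def y_def)
    qed
    have b1: "b \<le> 1"
    proof -
      have "x jb \<le> (\<Sum>j\<in>{1..4}. x j)" by (rule member_le_sum) (use x0 jb in \<open>auto simp: Pos_def\<close>)
      then show ?thesis using Sx by (simp add: S4_def b_def)
    qed
    have pY: "\<forall>j\<in>{1..4}. p j = - Bb + (4 * Bb) * y j" using px xy by simp
    have vW: "v = (1 / norm (W y)) *\<^sub>R W y" using form_w[OF n B(3) pY] Bb by simp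
    have Sy2: "(\<Sum>j\<in>{1..4}. (y j)^2) = real (card K1) * a^2 + real (card K2) * b^2"
      using sum_yp[OF K12, of "\<lambda>t. t^2" a b] by (simp add: y_def)
    have S4y: "S4 y = 1" using sum_yp[OF K12, of "\<lambda>t. t" a b] Sy by (simp add: S4_def y_def)
    have nW: "norm (W y) = sqrt ((4 * a\<^sup>2 * real (card K1) + 4 * b\<^sup>2 * real (card K2) - 1) / 3)"
      unfolding norm_eq_sqrt_inner W_normsq Sy2 S4y by (simp add: algebra_simps)
    have "v = (1 / sqrt ((4 * a\<^sup>2 * real (card K1) + 4 * b\<^sup>2 * real (card K2) - 1) / 3)) *\<^sub>R
                   (a *\<^sub>R (\<Sum>k\<in>K1. svec k) + b *\<^sub>R (\<Sum>k\<in>K2. svec k))"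
      using vW unfolding nW unfolding y_def W_yp[OF K12] .
    then show ?thesis using K12 K1n K2n cU a0 as sb b1 Sy fa by blast
  qed
qed



lemma frac_comb: "(D::real) \<noteq> 0 \<Longrightarrow> m1 * (A / D) + m2 * (B / D) + (4 - m1 - m2) * (1 / D) = (m1 * A + m2 * B + 4 - m1 - m2) / D"
  by (simp add: field_simps)

lemma IF_b:
  assumes d: "even d" "d \<ge> 2"
    and K12: "K1 \<subseteq> {1..4}" "K2 \<subseteq> {1..4}" "K1 \<inter> K2 = {}" and K1n: "K1 \<noteq> {}"
    and cU: "card (K1 \<union> K2) \<le> 3" and ab: "0 < a" "0 < b"
    and S: "real (card K1) * a + real (card K2) * b = 1"
    and g: "gfun d a / a = gfun d b / b"
    and v: "v = (1 / sqrt ((4 * a\<^sup>2 * real (card K1) + 4 * b\<^sup>2 * real (card K2) - 1) / 3)) *\<^sub>R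
                   (a *\<^sub>R (\<Sum>k\<in>K1. svec k) + b *\<^sub>R (\<Sum>k\<in>K2. svec k))"
  shows "norm v = 1"
    "\<forall>\<mu>. is_eigenpair d v \<mu> \<longleftrightarrow> \<mu> = (real (card K1) * (4 * a - 1) ^ d + real (card K2) * (4 * b - 1) ^ d
                    + 4 - real (card K1) - real (card K2)) /
                 (3 ^ (d div 2) * (4 * a\<^sup>2 * real (card K1) + 4 * b\<^sup>2 * real (card K2) - 1) ^ (d div 2))"
proof -
  define y where "y = yp K1 K2 a b"
  define Q where "Q = 4 * a\<^sup>2 * real (card K1) + 4 * b\<^sup>2 * real (card K2) - 1"
  define m1 where "m1 = real (card K1)"
  define m2 where "m2 = real (card K2)"
  have Wy: "W y = a *\<^sub>R (\<Sum>k\<in>K1. svec k) + b *\<^sub>R (\<Sum>k\<in>K2. svec k)"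
    unfolding y_def by (rule W_yp[OF K12])
  have S4y: "S4 y = 1" using sum_yp[OF K12, of "\<lambda>t. t" a b] S by (simp add: S4_def y_def)
  have Sy2: "(\<Sum>j\<in>{1..4}. (y j)^2) = real (card K1) * a^2 + real (card K2) * b^2"
    using sum_yp[OF K12, of "\<lambda>t. t^2" a b] by (simp add: y_def)
  have WW: "W y \<bullet> W y = Q / 3"
    unfolding W_normsq Sy2 S4y Q_def by (simp add: algebra_simps)
  define c where "c = norm (W y)"
  have cQ: "c = sqrt (Q / 3)" unfolding c_def norm_eq_sqrt_inner WW ..
  obtain j0 where j0: "j0 \<in> {1..4}" "j0 \<notin> K1 \<union> K2"
  proof -
    have "K1 \<union> K2 \<noteq> {1..4}" using cU by auto
    then show ?thesis using that K12 by blast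
  qed
  obtain k1 where k1: "k1 \<in> K1" using K1n by blast
  have nz: "W y \<noteq> 0"
  proof
    assume "W y = 0"
    from W_zero[OF this, of k1 j0] k1 K12 j0 ab show False by (auto simp: y_def yp_def)
  qed
  have c0: "c > 0" using nz by (simp add: c_def)
  have vv: "v = (1 / norm (W y)) *\<^sub>R W y" unfolding v Wy[symmetric] Q_def[symmetric] cQ[symmetric] c_def ..
  have inn: "v \<bullet> svec j = (4 * y j - 1) / (3 * c)" if "j \<in> {1..4}" for j
    using inner_normed[OF vv that] by (simp only: S4y c_def)
  define \<Lambda> where "\<Lambda> = gfun d a / a"
  have gy: "(4 * y j - 1)^(d-1) = \<Lambda> * y j - 1" if "j \<in> {1..4}" for j
  proof -
    have ga: "\<Lambda> * a = gfun d a" using ab by (simp add: \<Lambda>_def)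
    have gb: "\<Lambda> * b = gfun d b" using ab g by (simp add: \<Lambda>_def)
    show ?thesis
      using d ga gb K12(3) by (auto simp: y_def yp_def gfun_even)
  qed
  have eq: "\<forall>j\<in>{1..4}. (v \<bullet> svec j)^(d-1) = (\<Lambda> / (3*c)^(d-1)) * y j + (- 1 / (3*c)^(d-1))"
  proof
    fix j :: nat assume jj: "j \<in> {1..4}"
    have "(v \<bullet> svec j)^(d-1) = (4 * y j - 1)^(d-1) / (3*c)^(d-1)" by (simp add: inn[OF jj] power_divide)
    also have "\<dots> = (\<Lambda> * y j - 1) / (3*c)^(d-1)" unfolding gy[OF jj] ..
    finally show "(v \<bullet> svec j)^(d-1) = (\<Lambda> / (3*c)^(d-1)) * y j + (- 1 / (3*c)^(d-1))"
      by (simp add: diff_divide_distrib)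
  qed
  have d1: "d \<ge> 1" using d by simp
  note G = IF_gen[OF nz vv eq d1]
  show "norm v = 1" by (rule G(1))
  have "(\<Sum>j\<in>{1..4}. (v \<bullet> svec j)^d) = (\<Sum>j\<in>{1..4}. (\<lambda>t. ((4 * t - 1) / (3 * c))^d) (yp K1 K2 a b j))"
    by (rule sum.cong) (auto simp: inn y_def)
  also have "\<dots> = m1 * ((4 * a - 1) / (3 * c))^d + m2 * ((4 * b - 1) / (3 * c))^d + (4 - m1 - m2) * ((- 1) / (3 * c))^d"
    using sum_yp[OF K12, of "\<lambda>t. ((4 * t - 1) / (3 * c))^d" a b] by (simp add: m1_def m2_def)
  also have "\<dots> = (m1 * (4 * a - 1)^d + m2 * (4 * b - 1)^d + 4 - m1 - m2) / (3 * c)^d"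
  proof -
    have e: "((- 1) / (3 * c))^d = 1 / (3*c)^d" using d by (simp add: power_divide)
    have D: "(3 * c)^d \<noteq> 0" using c0 by simp
    show ?thesis unfolding e power_divide[of "4 * a - 1"] power_divide[of "4 * b - 1"]
      using frac_comb[OF D] by simp
  qed
  also have "(3 * c)^d = 3 ^ (d div 2) * Q ^ (d div 2)"
  proof -
    obtain k where k: "d = 2 * k" using d by blast
    have "Q / 3 \<ge> 0" unfolding WW[symmetric] by (rule inner_ge_zero)
    then have Q0: "Q \<ge> 0" by simp
    have "(3 * c)^2 = 3 * Q" using Q0 by (simp add: cQ power_mult_distrib)
    then have "(3 * c)^d = (3 * Q)^k" unfolding k power_mult by (rule arg_cong[where f="\<lambda>z. z^k"])
    then show ?thesis by (simp add: k power_mult_distrib)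
  qed
  finally show "\<forall>\<mu>. is_eigenpair d v \<mu> \<longleftrightarrow> \<mu> = (real (card K1) * (4 * a - 1) ^ d + real (card K2) * (4 * b - 1) ^ d
                    + 4 - real (card K1) - real (card K2)) /
                 (3 ^ (d div 2) * (4 * a\<^sup>2 * real (card K1) + 4 * b\<^sup>2 * real (card K2) - 1) ^ (d div 2))"
    using G(3) by (simp add: m1_def m2_def Q_def)
qed

lemma pos_even:
  assumes "even d" "d \<ge> 2" "norm v = 1" "is_eigenpair d v \<mu>" shows "\<mu> > 0"
proof -
  have mu: "\<mu> = (\<Sum>k\<in>{1..4}. (v \<bullet> svec k) ^ d)" using eig_val assms by simp
  have vv: "v \<bullet> v = 1" using assms(3) by (simp add: dot_square_norm)
  obtain j where j: "j \<in> {1..4}" "v \<bullet> svec j \<noteq> 0"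
    using p_not_all_zero[of "\<lambda>k. v \<bullet> svec k"] sum_p2[of v] vv by auto
  have nn: "\<forall>k\<in>{1..4}. 0 \<le> (v \<bullet> svec k) ^ d" using assms(1) by (simp add: zero_le_even_power)
  have "0 < (v \<bullet> svec j) ^ d" using j assms(1) by (simp add: zero_less_power_eq)
  also have "\<dots> \<le> (\<Sum>k\<in>{1..4}. (v \<bullet> svec k) ^ d)" by (rule member_le_sum) (use j nn in auto)
  finally show ?thesis using mu by simp
qed

lemma d2: assumes "norm (v::real^3) = 1" shows "is_eigenpair 2 v (4/3)"
proof -
  have "Tapply 2 v = (4/3) *\<^sub>R v" using frame[of v] by (simp add: Tapply_def)
  moreover have "v \<noteq> 0" using assms by auto
  ultimately show ?thesis by (simp add: is_eigenpair_def)
qed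

lemma sum0: "svec 1 + svec 2 + svec 3 + svec 4 = 0"
proof -
  have "W (\<lambda>k. 1) = 0" by (rule W_const)
  then show ?thesis unfolding W_def four by (simp add: add.assoc)
qed

lemma card2_cases: assumes "K \<subseteq> {1..4::nat}" "card K = 2"
  shows "K = {1,2} \<or> K = {1,3} \<or> K = {1,4} \<or> K = {2,3} \<or> K = {2,4} \<or> K = {3,4}"
proof -
  obtain x y where xy: "K = {x, y}" "x \<noteq> y" using assms(2) by (auto simp: card_2_iff)
  have "x \<in> {1,2,3,4}" "y \<in> {1,2,3,4}" using assms(1) xy by auto
  then show ?thesis using xy by (auto simp: insert_commute)
qed



lemma card_ge1: "K \<subseteq> {1..4::nat} \<Longrightarrow> K \<noteq> {} \<Longrightarrow> 1 \<le> real (card K)"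
proof -
  assume "K \<subseteq> {1..4::nat}" "K \<noteq> {}"
  moreover then have "finite K" using finite_subset by blast
  ultimately have "card K > 0" by (simp add: card_gt_0_iff)
  then show ?thesis by simp
qed

definition formv :: "nat set \<Rightarrow> real^3" where
  "formv K = (1 / sqrt (real (card K) * (4 - real (card K)) / 3)) *\<^sub>R (\<Sum>k\<in>K. svec k)"

definition formO :: "nat \<Rightarrow> nat set \<Rightarrow> real" where
  "formO d K = ((4 - real (card K)) ^ (d - 1) - real (card K) ^ (d - 1)) /
                 (3 powr (real d / 2) * (real (card K) * (4 - real (card K))) powr (real d / 2 - 1))"

lemma charO:
  assumes d: "odd d" "d \<ge> 3" and n: "norm v = 1"
  shows "is_eigenpair d v \<mu> \<longleftrightarrow> (\<exists>K. K \<subseteq> {1..4} \<and> K \<noteq> {} \<and> card K \<le> 3 \<and> v = formv K \<and> \<mu> = formO d K)"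
proof
  assume e: "is_eigenpair d v \<mu>"
  obtain K where K: "K \<subseteq> {1..4}" "K \<noteq> {}" "card K \<le> 3" "v = formv K"
    using odd_onlyif[OF d n e] unfolding formv_def by blast
  have "\<mu> = formO d K"
    using IF_a(2)[OF K(1,2,3) _ K(4)[unfolded formv_def]] e muA_odd[OF d card_ge1[OF K(1,2)]] K(3) d
    unfolding formO_def by simp
  then show "\<exists>K. K \<subseteq> {1..4} \<and> K \<noteq> {} \<and> card K \<le> 3 \<and> v = formv K \<and> \<mu> = formO d K" using K by blast
next
  assume "\<exists>K. K \<subseteq> {1..4} \<and> K \<noteq> {} \<and> card K \<le> 3 \<and> v = formv K \<and> \<mu> = formO d K"
  then obtain K where K: "K \<subseteq> {1..4}" "K \<noteq> {}" "card K \<le> 3" "v = formv K" "\<mu> = formO d K" by blast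
  show "is_eigenpair d v \<mu>"
    using IF_a(2)[OF K(1,2,3) _ K(4)[unfolded formv_def]] K(5) muA_odd[OF d card_ge1[OF K(1,2)]] K(3) d
    unfolding formO_def by simp
qed

lemma formO_zero:
  assumes d: "odd d" "d \<ge> 3" and K: "K \<subseteq> {1..4}" "K \<noteq> {}" "card K \<le> 3"
  shows "formO d K = 0 \<longleftrightarrow> card K = 2"
proof -
  have m1: "1 \<le> real (card K)" by (rule card_ge1[OF K(1,2)])
  have P: "real (card K) * (4 - real (card K)) > 0" using m1 K(3) by simp
  have den: "3 powr (real d / 2) * (real (card K) * (4 - real (card K))) powr (real d / 2 - 1) > 0"
    using P m1 by (intro mult_pos_pos) auto
  have c: "card K = 1 \<or> card K = 2 \<or> card K = 3" using m1 K(3) by linarith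
  have p3: "(3::real)^(d-1) > 1" using d by (intro one_less_power) auto
  show ?thesis unfolding formO_def using den c p3 by auto
qed

lemma sum0': "svec 2 + svec 3 = - (svec 1 + svec 4)" "svec 2 + svec 4 = - (svec 1 + svec 3)"
  "svec 3 + svec 4 = - (svec 1 + svec 2)"
proof -
  have s: "svec 1 + svec 2 + svec 3 + svec 4 = 0" by (rule sum0)
  have "svec 2 + svec 3 = (svec 1 + svec 2 + svec 3 + svec 4) - (svec 1 + svec 4)" by (simp add: algebra_simps)
  then show "svec 2 + svec 3 = - (svec 1 + svec 4)" unfolding s by simp
  have "svec 2 + svec 4 = (svec 1 + svec 2 + svec 3 + svec 4) - (svec 1 + svec 3)" by (simp add: algebra_simps)
  then show "svec 2 + svec 4 = - (svec 1 + svec 3)" unfolding s by simp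
  have "svec 3 + svec 4 = (svec 1 + svec 2 + svec 3 + svec 4) - (svec 1 + svec 2)" by (simp add: algebra_simps)
  then show "svec 3 + svec 4 = - (svec 1 + svec 2)" unfolding s by simp
qed

lemma pairs:
  "c *\<^sub>R (\<Sum>k\<in>{1,2}. svec k) = c *\<^sub>R (svec 1 + svec 2)"
  "c *\<^sub>R (\<Sum>k\<in>{1,3}. svec k) = c *\<^sub>R (svec 1 + svec 3)"
  "c *\<^sub>R (\<Sum>k\<in>{1,4}. svec k) = c *\<^sub>R (svec 1 + svec 4)"
  "c *\<^sub>R (\<Sum>k\<in>{3,4}. svec k) = - (c *\<^sub>R (svec 1 + svec 2))"
  "c *\<^sub>R (\<Sum>k\<in>{2,4}. svec k) = - (c *\<^sub>R (svec 1 + svec 3))"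
  "c *\<^sub>R (\<Sum>k\<in>{2,3}. svec k) = - (c *\<^sub>R (svec 1 + svec 4))"
proof -
  have e: "(\<Sum>k\<in>{x,y}. svec k) = svec x + svec y" if "x \<noteq> y" for x y :: nat using that by simp
  show "c *\<^sub>R (\<Sum>k\<in>{1,2}. svec k) = c *\<^sub>R (svec 1 + svec 2)" by simp
  show "c *\<^sub>R (\<Sum>k\<in>{1,3}. svec k) = c *\<^sub>R (svec 1 + svec 3)" by simp
  show "c *\<^sub>R (\<Sum>k\<in>{1,4}. svec k) = c *\<^sub>R (svec 1 + svec 4)" by simp
  have "(\<Sum>k\<in>{3,4}. svec k) = svec 3 + svec 4" by (rule e) simp
  then show "c *\<^sub>R (\<Sum>k\<in>{3,4}. svec k) = - (c *\<^sub>R (svec 1 + svec 2))" by (simp only: sum0'(3) scaleR_minus_right)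
  have "(\<Sum>k\<in>{2,4}. svec k) = svec 2 + svec 4" by (rule e) simp
  then show "c *\<^sub>R (\<Sum>k\<in>{2,4}. svec k) = - (c *\<^sub>R (svec 1 + svec 3))" by (simp only: sum0'(2) scaleR_minus_right)
  have "(\<Sum>k\<in>{2,3}. svec k) = svec 2 + svec 3" by (rule e) simp
  then show "c *\<^sub>R (\<Sum>k\<in>{2,3}. svec k) = - (c *\<^sub>R (svec 1 + svec 4))" by (simp only: sum0'(1) scaleR_minus_right)
qed

lemma six:
  "(\<exists>K. K \<subseteq> {1..4} \<and> card K = 2 \<and> v = c *\<^sub>R (\<Sum>k\<in>K. svec k)) \<longleftrightarrow>
   v \<in> {c *\<^sub>R (svec 1 + svec 2), c *\<^sub>R (svec 1 + svec 3), c *\<^sub>R (svec 1 + svec 4),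
        - (c *\<^sub>R (svec 1 + svec 2)), - (c *\<^sub>R (svec 1 + svec 3)), - (c *\<^sub>R (svec 1 + svec 4))}"
proof
  assume "\<exists>K. K \<subseteq> {1..4} \<and> card K = 2 \<and> v = c *\<^sub>R (\<Sum>k\<in>K. svec k)"
  then obtain K where K: "K \<subseteq> {1..4}" "card K = 2" "v = c *\<^sub>R (\<Sum>k\<in>K. svec k)" by blast
  from card2_cases[OF K(1,2)] show "v \<in> {c *\<^sub>R (svec 1 + svec 2), c *\<^sub>R (svec 1 + svec 3), c *\<^sub>R (svec 1 + svec 4),
        - (c *\<^sub>R (svec 1 + svec 2)), - (c *\<^sub>R (svec 1 + svec 3)), - (c *\<^sub>R (svec 1 + svec 4))}"
    using K(3) by (elim disjE; simp only: pairs insert_iff simp_thms)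
next
  assume v: "v \<in> {c *\<^sub>R (svec 1 + svec 2), c *\<^sub>R (svec 1 + svec 3), c *\<^sub>R (svec 1 + svec 4),
        - (c *\<^sub>R (svec 1 + svec 2)), - (c *\<^sub>R (svec 1 + svec 3)), - (c *\<^sub>R (svec 1 + svec 4))}"
  have ex: "\<exists>K. K \<subseteq> {1..4} \<and> card K = 2 \<and> v = c *\<^sub>R (\<Sum>k\<in>K. svec k)" if "K \<subseteq> {1..4}" "card K = 2" "v = c *\<^sub>R (\<Sum>k\<in>K. svec k)" for K
    using that by blast
  show "\<exists>K. K \<subseteq> {1..4} \<and> card K = 2 \<and> v = c *\<^sub>R (\<Sum>k\<in>K. svec k)"
    using v
  proof (elim insertE emptyE)
    assume "v = c *\<^sub>R (svec 1 + svec 2)" then show ?thesis using pairs by (intro ex[of "{1,2}"]) auto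
  next
    assume "v = c *\<^sub>R (svec 1 + svec 3)" then show ?thesis using pairs by (intro ex[of "{1,3}"]) auto
  next
    assume "v = c *\<^sub>R (svec 1 + svec 4)" then show ?thesis using pairs by (intro ex[of "{1,4}"]) auto
  next
    assume "v = - (c *\<^sub>R (svec 1 + svec 2))" then show ?thesis using pairs by (intro ex[of "{3,4}"]) auto
  next
    assume "v = - (c *\<^sub>R (svec 1 + svec 3))" then show ?thesis using pairs by (intro ex[of "{2,4}"]) auto
  next
    assume "v = - (c *\<^sub>R (svec 1 + svec 4))" then show ?thesis using pairs by (intro ex[of "{2,3}"]) auto
  qed
qed

definition XX :: "real \<Rightarrow> real \<Rightarrow> real \<Rightarrow> nat \<Rightarrow> real" where
  "XX \<alpha> \<beta> \<gamma> k = (if k = 1 then \<alpha> + \<beta> + \<gamma> else if k = 2 then \<alpha> else if k = 3 then \<beta> else \<gamma>)"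

lemma W_XX: "W (XX \<alpha> \<beta> \<gamma>) = \<alpha> *\<^sub>R (svec 1 + svec 2) + \<beta> *\<^sub>R (svec 1 + svec 3) + \<gamma> *\<^sub>R (svec 1 + svec 4)"
  unfolding W_def four by (simp add: XX_def algebra_simps scaleR_add_left scaleR_add_right)

lemma indep:
  assumes c: "c \<noteq> 0"
  shows "independent {c *\<^sub>R (svec 1 + svec 2), c *\<^sub>R (svec 1 + svec 3), c *\<^sub>R (svec 1 + svec 4)}
    \<and> card {c *\<^sub>R (svec 1 + svec 2), c *\<^sub>R (svec 1 + svec 3), c *\<^sub>R (svec 1 + svec 4)} = 3"
proof -
  define w1 where "w1 = c *\<^sub>R (svec 1 + svec 2)"
  define w2 where "w2 = c *\<^sub>R (svec 1 + svec 3)"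
  define w3 where "w3 = c *\<^sub>R (svec 1 + svec 4)"
  have Ww: "W (XX c 0 0) = w1" "W (XX 0 c 0) = w2" "W (XX 0 0 c) = w3"
    by (simp_all add: W_XX w1_def w2_def w3_def)
  have i1: "(1::nat) \<in> {1..4}" and i2: "(2::nat) \<in> {1..4}" and i3: "(3::nat) \<in> {1..4}" and i4: "(4::nat) \<in> {1..4}" by auto
  have d12: "w1 \<noteq> w2"
  proof
    assume "w1 = w2" then have "W (XX c 0 0) = W (XX 0 c 0)" using Ww by simp
    from W_eq[OF this i1 i2] c show False by (simp add: XX_def)
  qed
  have d13: "w1 \<noteq> w3"
  proof
    assume "w1 = w3" then have "W (XX c 0 0) = W (XX 0 0 c)" using Ww by simp
    from W_eq[OF this i1 i2] c show False by (simp add: XX_def)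
  qed
  have d23: "w2 \<noteq> w3"
  proof
    assume "w2 = w3" then have "W (XX 0 c 0) = W (XX 0 0 c)" using Ww by simp
    from W_eq[OF this i1 i3] c show False by (simp add: XX_def)
  qed
  have ind: "independent {w1, w2, w3}"
  proof
    assume "dependent {w1, w2, w3}"
    then obtain u where u: "\<exists>v\<in>{w1, w2, w3}. u v \<noteq> 0" "(\<Sum>v\<in>{w1, w2, w3}. u v *\<^sub>R v) = 0"
      using real_vector.dependent_finite[of "{w1, w2, w3}"] by auto
    have "(\<Sum>v\<in>{w1, w2, w3}. u v *\<^sub>R v) = u w1 *\<^sub>R w1 + u w2 *\<^sub>R w2 + u w3 *\<^sub>R w3"
      using d12 d13 d23 by (simp add: add.assoc)
    also have "\<dots> = W (XX (c * u w1) (c * u w2) (c * u w3))"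
      by (simp add: W_XX w1_def w2_def w3_def mult.commute)
    finally have W0: "W (XX (c * u w1) (c * u w2) (c * u w3)) = 0" using u(2) by simp
    have E: "c * u w2 + c * u w3 = 0 \<and> c * u w1 + c * u w3 = 0 \<and> c * u w1 + c * u w2 = 0"
      using W_zero[OF W0 i2 i1] W_zero[OF W0 i3 i1] W_zero[OF W0 i4 i1] by (simp add: XX_def)
    then have "c * u w1 = 0" "c * u w2 = 0" "c * u w3 = 0" by linarith+
    then show False using u(1) c by auto
  qed
  have "card {w1, w2, w3} = 3" using d12 d13 d23 by simp
  then show ?thesis using ind by (simp add: w1_def w2_def w3_def)
qed

lemma part_odd:
  assumes od: "odd d" "d \<ge> 3"
  shows "(\<forall>(v::real^3) \<mu>. norm v = 1 \<longrightarrow>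
        (is_eigenpair d v \<mu> \<longleftrightarrow>
          (\<exists>K. K \<subseteq> {1..4} \<and> K \<noteq> {} \<and> card K \<le> 3 \<and>
             v = (1 / sqrt (real (card K) * (4 - real (card K)) / 3)) *\<^sub>R (\<Sum>k\<in>K. svec k) \<and>
             \<mu> = ((4 - real (card K)) ^ (d - 1) - real (card K) ^ (d - 1)) /
                 (3 powr (real d / 2) * (real (card K) * (4 - real (card K))) powr (real d / 2 - 1)))))
     \<and>
     (\<forall>K::nat set. K \<subseteq> {1..4} \<and> K \<noteq> {} \<and> card K \<le> 3 \<longrightarrow>
        (((4 - real (card K)) ^ (d - 1) - real (card K) ^ (d - 1)) /
           (3 powr (real d / 2) * (real (card K) * (4 - real (card K))) powr (real d / 2 - 1)) = 0
         \<longleftrightarrow> card K = 2))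
     \<and>
     (let w1 = (1 / sqrt (4/3)) *\<^sub>R (svec 1 + svec 2);
          w2 = (1 / sqrt (4/3)) *\<^sub>R (svec 1 + svec 3);
          w3 = (1 / sqrt (4/3)) *\<^sub>R (svec 1 + svec 4)
      in (\<forall>v::real^3. norm v = 1 \<longrightarrow>
            (is_eigenpair d v 0 \<longleftrightarrow> v \<in> {w1, w2, w3, -w1, -w2, -w3}))
         \<and> independent {w1, w2, w3} \<and> card {w1, w2, w3} = 3)"
proof (intro conjI)
  show "\<forall>(v::real^3) \<mu>. norm v = 1 \<longrightarrow>
        (is_eigenpair d v \<mu> \<longleftrightarrow>
          (\<exists>K. K \<subseteq> {1..4} \<and> K \<noteq> {} \<and> card K \<le> 3 \<and>
             v = (1 / sqrt (real (card K) * (4 - real (card K)) / 3)) *\<^sub>R (\<Sum>k\<in>K. svec k) \<and>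
             \<mu> = ((4 - real (card K)) ^ (d - 1) - real (card K) ^ (d - 1)) /
                 (3 powr (real d / 2) * (real (card K) * (4 - real (card K))) powr (real d / 2 - 1))))"
    using charO[OF od] unfolding formv_def formO_def by blast
  show "\<forall>K::nat set. K \<subseteq> {1..4} \<and> K \<noteq> {} \<and> card K \<le> 3 \<longrightarrow>
        (((4 - real (card K)) ^ (d - 1) - real (card K) ^ (d - 1)) /
           (3 powr (real d / 2) * (real (card K) * (4 - real (card K))) powr (real d / 2 - 1)) = 0
         \<longleftrightarrow> card K = 2)"
    using formO_zero[OF od] unfolding formO_def by blast
  define c where "c = 1 / sqrt (4/3::real)"
  have c0: "c \<noteq> 0" by (simp add: c_def)
  have e0: "is_eigenpair d v 0 \<longleftrightarrow> (\<exists>K. K \<subseteq> {1..4} \<and> card K = 2 \<and> v = c *\<^sub>R (\<Sum>k\<in>K. svec k))"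
    if n: "norm v = 1" for v :: "real^3"
  proof
    assume "is_eigenpair d v 0"
    then obtain K where K: "K \<subseteq> {1..4}" "K \<noteq> {}" "card K \<le> 3" "v = formv K" "0 = formO d K"
      using charO[OF od n] by blast
    have c2: "card K = 2" using formO_zero[OF od K(1,2,3)] K(5) by simp
    have "v = c *\<^sub>R (\<Sum>k\<in>K. svec k)" using K(4) c2 by (simp add: formv_def c_def)
    then show "\<exists>K. K \<subseteq> {1..4} \<and> card K = 2 \<and> v = c *\<^sub>R (\<Sum>k\<in>K. svec k)" using K(1) c2 by blast
  next
    assume "\<exists>K. K \<subseteq> {1..4} \<and> card K = 2 \<and> v = c *\<^sub>R (\<Sum>k\<in>K. svec k)"
    then obtain K where K: "K \<subseteq> {1..4}" "card K = 2" "v = c *\<^sub>R (\<Sum>k\<in>K. svec k)" by blast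
    have Kn: "K \<noteq> {}" using K(2) by auto
    have "v = formv K" using K(2,3) by (simp add: formv_def c_def)
    moreover have "0 = formO d K" using formO_zero[OF od K(1) Kn] K(2) by simp
    ultimately show "is_eigenpair d v 0" using charO[OF od n] K(1,2) Kn by auto
  qed
  show "let w1 = (1 / sqrt (4/3)) *\<^sub>R (svec 1 + svec 2);
          w2 = (1 / sqrt (4/3)) *\<^sub>R (svec 1 + svec 3);
          w3 = (1 / sqrt (4/3)) *\<^sub>R (svec 1 + svec 4)
      in (\<forall>v::real^3. norm v = 1 \<longrightarrow>
            (is_eigenpair d v 0 \<longleftrightarrow> v \<in> {w1, w2, w3, -w1, -w2, -w3}))
         \<and> independent {w1, w2, w3} \<and> card {w1, w2, w3} = 3"
    unfolding Let_def c_def[symmetric] using e0 six indep[OF c0] by auto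
qed

lemma part_even:
  assumes ev: "even d" "d \<ge> 4"
  shows "(\<forall>(v::real^3) \<mu>. norm v = 1 \<longrightarrow>
        (is_eigenpair d v \<mu> \<longleftrightarrow>
          (\<exists>K. K \<subseteq> {1..4} \<and> K \<noteq> {} \<and> card K \<le> 3 \<and>
             v = (1 / sqrt (real (card K) * (4 - real (card K)) / 3)) *\<^sub>R (\<Sum>k\<in>K. svec k) \<and>
             \<mu> = ((4 - real (card K)) ^ (d - 1) + real (card K) ^ (d - 1)) /
                 (3 ^ (d div 2) * (real (card K) * (4 - real (card K))) ^ (d div 2 - 1)))
          \<or>
          (\<exists>K1 K2 a b. K1 \<subseteq> {1..4} \<and> K2 \<subseteq> {1..4} \<and> K1 \<noteq> {} \<and> K2 \<noteq> {} \<and>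
             K1 \<inter> K2 = {} \<and> card (K1 \<union> K2) \<le> 3 \<and>
             0 < a \<and> a \<le> s_star d \<and> s_star d < b \<and> b \<le> 1 \<and>
             real (card K1) * a + real (card K2) * b = 1 \<and>
             gfun d a / a = gfun d b / b \<and>
             v = (1 / sqrt ((4 * a\<^sup>2 * real (card K1) + 4 * b\<^sup>2 * real (card K2) - 1) / 3)) *\<^sub>R
                   (a *\<^sub>R (\<Sum>k\<in>K1. svec k) + b *\<^sub>R (\<Sum>k\<in>K2. svec k)) \<and>
             \<mu> = (real (card K1) * (4 * a - 1) ^ d + real (card K2) * (4 * b - 1) ^ d
                    + 4 - real (card K1) - real (card K2)) /
                 (3 ^ (d div 2) * (4 * a\<^sup>2 * real (card K1) + 4 * b\<^sup>2 * real (card K2) - 1) ^ (d div 2)))))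
     \<and>
     (\<forall>(v::real^3) \<mu>. norm v = 1 \<and> is_eigenpair d v \<mu> \<longrightarrow> \<mu> > 0)"
proof (intro conjI allI impI)
  fix v :: "real^3" and \<mu> :: real
  assume "norm v = 1 \<and> is_eigenpair d v \<mu>"
  then show "\<mu> > 0" using pos_even[of d v \<mu>] ev by auto
next
  fix v :: "real^3" and \<mu> :: real
  assume n: "norm v = 1"
  have d1: "d \<ge> 1" "d \<ge> 2" using ev by auto
  have evA: "is_eigenpair d v \<mu> \<longleftrightarrow> \<mu> = ((4 - real (card K)) ^ (d - 1) + real (card K) ^ (d - 1)) /
                 (3 ^ (d div 2) * (real (card K) * (4 - real (card K))) ^ (d div 2 - 1))"
    if K: "K \<subseteq> {1..4}" "K \<noteq> {}" "card K \<le> 3"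
      and v: "v = (1 / sqrt (real (card K) * (4 - real (card K)) / 3)) *\<^sub>R (\<Sum>k\<in>K. svec k)" for K
    using IF_a(2)[OF K d1(1) v] muA_even[OF ev(1) d1(2) card_ge1[OF K(1,2)]] K(3) by simp
  show "is_eigenpair d v \<mu> \<longleftrightarrow> (\<exists>K. K \<subseteq> {1..4} \<and> K \<noteq> {} \<and> card K \<le> 3 \<and>
             v = (1 / sqrt (real (card K) * (4 - real (card K)) / 3)) *\<^sub>R (\<Sum>k\<in>K. svec k) \<and>
             \<mu> = ((4 - real (card K)) ^ (d - 1) + real (card K) ^ (d - 1)) /
                 (3 ^ (d div 2) * (real (card K) * (4 - real (card K))) ^ (d div 2 - 1)))
          \<or>
          (\<exists>K1 K2 a b. K1 \<subseteq> {1..4} \<and> K2 \<subseteq> {1..4} \<and> K1 \<noteq> {} \<and> K2 \<noteq> {} \<and>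
             K1 \<inter> K2 = {} \<and> card (K1 \<union> K2) \<le> 3 \<and>
             0 < a \<and> a \<le> s_star d \<and> s_star d < b \<and> b \<le> 1 \<and>
             real (card K1) * a + real (card K2) * b = 1 \<and>
             gfun d a / a = gfun d b / b \<and>
             v = (1 / sqrt ((4 * a\<^sup>2 * real (card K1) + 4 * b\<^sup>2 * real (card K2) - 1) / 3)) *\<^sub>R
                   (a *\<^sub>R (\<Sum>k\<in>K1. svec k) + b *\<^sub>R (\<Sum>k\<in>K2. svec k)) \<and>
             \<mu> = (real (card K1) * (4 * a - 1) ^ d + real (card K2) * (4 * b - 1) ^ d
                    + 4 - real (card K1) - real (card K2)) /
                 (3 ^ (d div 2) * (4 * a\<^sup>2 * real (card K1) + 4 * b\<^sup>2 * real (card K2) - 1) ^ (d div 2)))"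
    (is "?E \<longleftrightarrow> ?A \<or> ?B")
  proof
    assume e: ?E
    from even_onlyif[OF ev n e] show "?A \<or> ?B"
    proof (elim disjE exE conjE)
      fix K assume K: "K \<subseteq> {1..4}" "K \<noteq> {}" "card K \<le> 3"
        and v: "v = (1 / sqrt (real (card K) * (4 - real (card K)) / 3)) *\<^sub>R (\<Sum>k\<in>K. svec k)"
      then have "?A" using evA[OF K v] e by blast
      then show ?thesis ..
    next
      fix K1 K2 a b assume h: "K1 \<subseteq> {1..4}" "K2 \<subseteq> {1..4}" "K1 \<noteq> {}" "K2 \<noteq> {}"
             "K1 \<inter> K2 = {}" "card (K1 \<union> K2) \<le> 3"
             "0 < a" "a \<le> s_star d" "s_star d < b" "b \<le> 1"
             "real (card K1) * a + real (card K2) * b = 1"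
             "gfun d a / a = gfun d b / b"
             "v = (1 / sqrt ((4 * a\<^sup>2 * real (card K1) + 4 * b\<^sup>2 * real (card K2) - 1) / 3)) *\<^sub>R
                   (a *\<^sub>R (\<Sum>k\<in>K1. svec k) + b *\<^sub>R (\<Sum>k\<in>K2. svec k))"
      have b0: "0 < b" using h(7,8,9) by linarith
      have "\<mu> = (real (card K1) * (4 * a - 1) ^ d + real (card K2) * (4 * b - 1) ^ d
                    + 4 - real (card K1) - real (card K2)) /
                 (3 ^ (d div 2) * (4 * a\<^sup>2 * real (card K1) + 4 * b\<^sup>2 * real (card K2) - 1) ^ (d div 2))"
        using IF_b(2)[OF ev(1) d1(2) h(1,2,5,3,6,7) b0 h(11,12,13)] e by blast
      then have ?B using h by blast
      then show ?thesis ..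
    qed
  next
    assume "?A \<or> ?B"
    then show ?E
    proof (elim disjE exE conjE)
      fix K assume K: "K \<subseteq> {1..4}" "K \<noteq> {}" "card K \<le> 3"
        and v: "v = (1 / sqrt (real (card K) * (4 - real (card K)) / 3)) *\<^sub>R (\<Sum>k\<in>K. svec k)"
        and m: "\<mu> = ((4 - real (card K)) ^ (d - 1) + real (card K) ^ (d - 1)) /
                 (3 ^ (d div 2) * (real (card K) * (4 - real (card K))) ^ (d div 2 - 1))"
      show ?E using evA[OF K v] m by blast
    next
      fix K1 K2 a b assume h: "K1 \<subseteq> {1..4}" "K2 \<subseteq> {1..4}" "K1 \<noteq> {}" "K2 \<noteq> {}"
             "K1 \<inter> K2 = {}" "card (K1 \<union> K2) \<le> 3"
             "0 < a" "a \<le> s_star d" "s_star d < b" "b \<le> 1"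
             "real (card K1) * a + real (card K2) * b = 1"
             "gfun d a / a = gfun d b / b"
             "v = (1 / sqrt ((4 * a\<^sup>2 * real (card K1) + 4 * b\<^sup>2 * real (card K2) - 1) / 3)) *\<^sub>R
                   (a *\<^sub>R (\<Sum>k\<in>K1. svec k) + b *\<^sub>R (\<Sum>k\<in>K2. svec k))"
             "\<mu> = (real (card K1) * (4 * a - 1) ^ d + real (card K2) * (4 * b - 1) ^ d
                    + 4 - real (card K1) - real (card K2)) /
                 (3 ^ (d div 2) * (4 * a\<^sup>2 * real (card K1) + 4 * b\<^sup>2 * real (card K2) - 1) ^ (d div 2))"
      have b0: "0 < b" using h(7,8,9) by linarith
      show ?E using IF_b(2)[OF ev(1) d1(2) h(1,2,5,3,6,7) b0 h(11,12,13)] h(14) by blast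
    qed
  qed
qed

theorem mainTheorem10:
  fixes d :: nat
  assumes "d \<ge> 2"
  shows
  "(d = 2 \<longrightarrow> (\<forall>v::real^3. norm v = 1 \<longrightarrow> is_eigenpair d v (4/3)))
   \<and>
   (odd d \<and> d \<ge> 3 \<longrightarrow>
     (\<forall>(v::real^3) \<mu>. norm v = 1 \<longrightarrow>
        (is_eigenpair d v \<mu> \<longleftrightarrow>
          (\<exists>K. K \<subseteq> {1..4} \<and> K \<noteq> {} \<and> card K \<le> 3 \<and>
             v = (1 / sqrt (real (card K) * (4 - real (card K)) / 3)) *\<^sub>R (\<Sum>k\<in>K. svec k) \<and>
             \<mu> = ((4 - real (card K)) ^ (d - 1) - real (card K) ^ (d - 1)) /
                 (3 powr (real d / 2) * (real (card K) * (4 - real (card K))) powr (real d / 2 - 1)))))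
     \<and>
     (\<forall>K::nat set. K \<subseteq> {1..4} \<and> K \<noteq> {} \<and> card K \<le> 3 \<longrightarrow>
        (((4 - real (card K)) ^ (d - 1) - real (card K) ^ (d - 1)) /
           (3 powr (real d / 2) * (real (card K) * (4 - real (card K))) powr (real d / 2 - 1)) = 0
         \<longleftrightarrow> card K = 2))
     \<and>
     (let w1 = (1 / sqrt (4/3)) *\<^sub>R (svec 1 + svec 2);
          w2 = (1 / sqrt (4/3)) *\<^sub>R (svec 1 + svec 3);
          w3 = (1 / sqrt (4/3)) *\<^sub>R (svec 1 + svec 4)
      in (\<forall>v::real^3. norm v = 1 \<longrightarrow>
            (is_eigenpair d v 0 \<longleftrightarrow> v \<in> {w1, w2, w3, -w1, -w2, -w3}))
         \<and> independent {w1, w2, w3} \<and> card {w1, w2, w3} = 3))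
   \<and>
   (even d \<and> d \<ge> 4 \<longrightarrow>
     (\<forall>(v::real^3) \<mu>. norm v = 1 \<longrightarrow>
        (is_eigenpair d v \<mu> \<longleftrightarrow>
          (\<exists>K. K \<subseteq> {1..4} \<and> K \<noteq> {} \<and> card K \<le> 3 \<and>
             v = (1 / sqrt (real (card K) * (4 - real (card K)) / 3)) *\<^sub>R (\<Sum>k\<in>K. svec k) \<and>
             \<mu> = ((4 - real (card K)) ^ (d - 1) + real (card K) ^ (d - 1)) /
                 (3 ^ (d div 2) * (real (card K) * (4 - real (card K))) ^ (d div 2 - 1)))
          \<or>
          (\<exists>K1 K2 a b. K1 \<subseteq> {1..4} \<and> K2 \<subseteq> {1..4} \<and> K1 \<noteq> {} \<and> K2 \<noteq> {} \<and>
             K1 \<inter> K2 = {} \<and> card (K1 \<union> K2) \<le> 3 \<and>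
             0 < a \<and> a \<le> s_star d \<and> s_star d < b \<and> b \<le> 1 \<and>
             real (card K1) * a + real (card K2) * b = 1 \<and>
             gfun d a / a = gfun d b / b \<and>
             v = (1 / sqrt ((4 * a\<^sup>2 * real (card K1) + 4 * b\<^sup>2 * real (card K2) - 1) / 3)) *\<^sub>R
                   (a *\<^sub>R (\<Sum>k\<in>K1. svec k) + b *\<^sub>R (\<Sum>k\<in>K2. svec k)) \<and>
             \<mu> = (real (card K1) * (4 * a - 1) ^ d + real (card K2) * (4 * b - 1) ^ d
                    + 4 - real (card K1) - real (card K2)) /
                 (3 ^ (d div 2) * (4 * a\<^sup>2 * real (card K1) + 4 * b\<^sup>2 * real (card K2) - 1) ^ (d div 2)))))
     \<and>
     (\<forall>(v::real^3) \<mu>. norm v = 1 \<and> is_eigenpair d v \<mu> \<longrightarrow> \<mu> > 0))"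
proof -
  have P1: "d = 2 \<longrightarrow> (\<forall>v::real^3. norm v = 1 \<longrightarrow> is_eigenpair d v (4/3))" using d2 by auto
  show ?thesis
    using P1 part_odd[of d] part_even[of d] by auto
qed



end
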